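(* Let $I\subset\mathbb R$ be an open interval and let $\mu,\nu$ be locally finite measures on $(I,\mathcal B(I))$. Then the derivative $\overline D_\nu(\mu)$ exists $\mu,\nu$-a.e. on $I$ and is a version of the generalized Radon–Nikodym derivative $\partial\mu/\partial\nu$. In particular, the same holds for the symmetric derivative $D^{\mathrm{sym}}_\nu(\mu)$.
   Context: For $x\in\mathbb R$, $r>0$, $B(x,r)$ is the open ball of center $x$ and radius $r$. A sequence $(A_j)_{j\ge1}\subset\mathcal B(I)$ converges $\nu$-measure-metrizably to $x\in I$ if there are $r_j>0$ with $A_j\subset B(x,r_j)\subset I$ for all $j$, $r_j\to0$, and there is $\alpha\in(0,1]$ with $\nu(A_j)\ge\alpha\,\nu(B(x,r_j))$ for all $j$. $\overline D_\nu(\mu)(x)=z\in[0,\infty]$ means that $\lim_{j\to\infty}\mu(A_j)/\nu(A_j)=z$ for every sequence $(A_j)$ that converges both $\mu$-measure-metrizably and $\nu$-measure-metrizably to $x$. The symmetric derivative is $D^{\mathrm{sym}}_\nu(\mu)(x)=\lim_{r\searrow0}\mu(B(x,r))/\nu(B(x,r))$ when this limit exists in $[0,\infty]$. Generalized Radon–Nikodym derivative: $\partial\mu/\partial\nu$ is a Borel map $I\to[0,\infty]$ with $\frac{\partial\mu}{\partial\nu}=\frac{d\mu/d\gamma}{d\nu/d\gamma}$ $\mu,\nu$-a.e. for any $\sigma$-finite $\gamma$ dominating $\mu$ and $\nu$ (independent of $\gamma$). "$\mu,\nu$-a.e." means outside a set null for both $\mu$ and $\nu$. *)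

theory Defs
  imports "HOL-Analysis.Analysis"
begin

abbreviation borel_on :: "real set \<Rightarrow> real measure" where
  "borel_on I \<equiv> restrict_space borel I"

definition locally_finite_on :: "real set \<Rightarrow> real measure \<Rightarrow> bool" where
  "locally_finite_on I \<mu> \<longleftrightarrow>
     sets \<mu> = sets (borel_on I) \<and>
     (\<forall>K. compact K \<and> K \<subseteq> I \<longrightarrow> emeasure \<mu> K < \<infinity>)"

definition mm_converges :: "real measure \<Rightarrow> real set \<Rightarrow> (nat \<Rightarrow> real set) \<Rightarrow> real \<Rightarrow> bool" where
  "mm_converges \<nu> I A x \<longleftrightarrow>
     (\<forall>j. A j \<in> sets (borel_on I)) \<and>
     (\<exists>r :: nat \<Rightarrow> real.
        (\<forall>j. r j > 0 \<and> A j \<subseteq> ball x (r j) \<and> ball x (r j) \<subseteq> I) \<and>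
        r \<longlonglongrightarrow> 0 \<and>
        (\<exists>\<alpha>::real. 0 < \<alpha> \<and> \<alpha> \<le> 1 \<and>
           (\<forall>j. emeasure \<nu> (A j) \<ge> ennreal \<alpha> * emeasure \<nu> (ball x (r j)))))"

text \<open>\<open>Dbar \<mu> \<nu> I x z\<close>: the derivative of mu w.r.t. nu at x exists and equals z.
  Quotients are taken in ennreal (a/0 = \<infinity> for a > 0, 0/0 = 0).\<close>
definition Dbar :: "real measure \<Rightarrow> real measure \<Rightarrow> real set \<Rightarrow> real \<Rightarrow> ennreal \<Rightarrow> bool" where
  "Dbar \<mu> \<nu> I x z \<longleftrightarrow>
     (\<forall>A. mm_converges \<mu> I A x \<and> mm_converges \<nu> I A x \<longrightarrow>
        ((\<lambda>j. emeasure \<mu> (A j) / emeasure \<nu> (A j)) \<longlongrightarrow> z) sequentially)"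

definition Dsym :: "real measure \<Rightarrow> real measure \<Rightarrow> real \<Rightarrow> ennreal \<Rightarrow> bool" where
  "Dsym \<mu> \<nu> x z \<longleftrightarrow>
     ((\<lambda>r. emeasure \<mu> (ball x r) / emeasure \<nu> (ball x r)) \<longlongrightarrow> z) (at_right 0)"

definition gen_RN_deriv :: "real set \<Rightarrow> real measure \<Rightarrow> real measure \<Rightarrow> (real \<Rightarrow> ennreal) \<Rightarrow> bool" where
  "gen_RN_deriv I \<mu> \<nu> f \<longleftrightarrow>
     f \<in> borel_measurable (borel_on I) \<and>
     (\<forall>\<gamma>. sigma_finite_measure \<gamma> \<and> sets \<gamma> = sets (borel_on I) \<and>
          absolutely_continuous \<gamma> \<mu> \<and> absolutely_continuous \<gamma> \<nu> \<longrightarrow>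
          (\<exists>N \<in> null_sets \<mu> \<inter> null_sets \<nu>.
             \<forall>x \<in> I - N. f x = RN_deriv \<gamma> \<mu> x / RN_deriv \<gamma> \<nu> x))"

end

theory Submission
  imports Defs
begin

lemma cover3:
  fixes a1 b1 a2 b2 a3 b3 x :: real
  assumes "a1 < x" "x < b1" "a2 < x" "x < b2" "a1 \<le> a3" "b3 \<le> b2"
  shows "{a3<..<b3} \<subseteq> {a1<..<b1} \<union> {a2<..<b2}"
proof
  fix y assume "y \<in> {a3<..<b3}"
  then have y: "a3 < y" "y < b3" by auto
  show "y \<in> {a1<..<b1} \<union> {a2<..<b2}"
  proof (cases "y < b1")
    case True then show ?thesis using y assms by auto
  next
    case False then show ?thesis using y assms by auto
  qed
qed

lemma triple_cover:
  fixes x :: real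
  assumes "x \<in> {a1<..<b1}" "x \<in> {a2<..<b2}" "x \<in> {a3<..<b3}"
  shows "{a1<..<b1} \<subseteq> {a2<..<b2} \<union> {a3<..<b3} \<or> {a2<..<b2} \<subseteq> {a1<..<b1} \<union> {a3<..<b3}
       \<or> {a3<..<b3} \<subseteq> {a1<..<b1} \<union> {a2<..<b2}"
proof -
  have h: "a1 < x" "x < b1" "a2 < x" "x < b2" "a3 < x" "x < b3" using assms by auto
  show ?thesis
  proof (cases "a1 \<le> a2 \<and> a1 \<le> a3")
    case True
    show ?thesis
    proof (cases "b2 \<le> b3")
      case True
      then show ?thesis using cover3[of a1 x b1 a3 b3 a2 b2] h \<open>a1 \<le> a2 \<and> a1 \<le> a3\<close> by auto
    next
      case False
      then show ?thesis using cover3[of a1 x b1 a2 b2 a3 b3] h \<open>a1 \<le> a2 \<and> a1 \<le> a3\<close> by auto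
    qed
  next
    case F1: False
    show ?thesis
    proof (cases "a2 \<le> a3")
      case True
      with F1 have m: "a2 \<le> a1" "a2 \<le> a3" by auto
      show ?thesis
      proof (cases "b1 \<le> b3")
        case True
        then show ?thesis using cover3[of a2 x b2 a3 b3 a1 b1] h m by auto
      next
        case False
        then show ?thesis using cover3[of a2 x b2 a1 b1 a3 b3] h m by auto
      qed
    next
      case False
      with F1 have m: "a3 \<le> a1" "a3 \<le> a2" by auto
      show ?thesis
      proof (cases "b1 \<le> b2")
        case True
        then show ?thesis using cover3[of a3 x b3 a2 b2 a1 b1] h m by auto
      next
        case False
        then show ?thesis using cover3[of a3 x b3 a1 b1 a2 b2] h m by auto
      qed
    qed
  qed
qed

lemma card_ge3_obtain:
  assumes "finite S" "card S \<ge> 3"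
  obtains p q r where "p \<in> S" "q \<in> S" "r \<in> S" "p \<noteq> q" "p \<noteq> r" "q \<noteq> r"
proof -
  obtain T where "T \<subseteq> S" "card T = 3" using obtain_subset_with_card_n[OF assms(2)] by auto
  then obtain p q r where "T = {p,q,r}" "p \<noteq> q" "q \<noteq> r" "p \<noteq> r"
    unfolding card_3_iff by blast
  then show ?thesis using that \<open>T \<subseteq> S\<close> by blast
qed

definition is_oint :: "real set \<Rightarrow> bool" where
  "is_oint B \<longleftrightarrow> (\<exists>a b. B = {a<..<b})"

lemma overlap2:
  assumes "finite \<B>" "\<forall>B\<in>\<B>. is_oint B"
  shows "\<exists>\<B>'\<subseteq>\<B>. \<Union>\<B>' = \<Union>\<B> \<and> (\<forall>x. card {B\<in>\<B>'. x \<in> B} \<le> 2)"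
  using assms
proof (induction "card \<B>" arbitrary: \<B> rule: less_induct)
  case less
  show ?case
  proof (cases "\<exists>B\<in>\<B>. B \<subseteq> \<Union>(\<B> - {B})")
    case True
    then obtain B where B: "B \<in> \<B>" "B \<subseteq> \<Union>(\<B> - {B})" by blast
    have lt: "card (\<B> - {B}) < card \<B>" using B(1) less.prems(1) by (rule card_Diff1_less[rotated])
    have fin: "finite (\<B> - {B})" using less.prems(1) by simp
    have oi: "\<forall>B'\<in>\<B> - {B}. is_oint B'" using less.prems(2) by simp
    obtain \<B>' where h: "\<B>' \<subseteq> \<B> - {B}" "\<Union>\<B>' = \<Union>(\<B> - {B})" "\<forall>x. card {B\<in>\<B>'. x \<in> B} \<le> 2"
      using less.hyps[OF lt fin oi] by blast
    have "\<Union>(\<B> - {B}) = \<Union>\<B>" using B by blast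
    then show ?thesis using h(1,3) h(2) by (metis Diff_subset subset_trans)
  next
    case False
    have "card {B\<in>\<B>. x \<in> B} \<le> 2" for x
    proof (rule ccontr)
      assume "\<not> ?thesis"
      then have c3: "card {B\<in>\<B>. x \<in> B} \<ge> 3" by simp
      have "finite {B\<in>\<B>. x \<in> B}" using less.prems(1) by simp
      from this c3 obtain p q r where pqr: "p \<in> {B\<in>\<B>. x \<in> B}" "q \<in> {B\<in>\<B>. x \<in> B}" "r \<in> {B\<in>\<B>. x \<in> B}"
        "p \<noteq> q" "p \<noteq> r" "q \<noteq> r"
        by (rule card_ge3_obtain)
      obtain a1 b1 where e1: "p = {a1<..<b1}" using pqr(1) less.prems(2) unfolding is_oint_def by blast
      obtain a2 b2 where e2: "q = {a2<..<b2}" using pqr(2) less.prems(2) unfolding is_oint_def by blast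
      obtain a3 b3 where e3: "r = {a3<..<b3}" using pqr(3) less.prems(2) unfolding is_oint_def by blast
      have "p \<subseteq> q \<union> r \<or> q \<subseteq> p \<union> r \<or> r \<subseteq> p \<union> q"
        using triple_cover[of x a1 b1 a2 b2 a3 b3] pqr(1-3) e1 e2 e3 by simp
      moreover have "q \<union> r \<subseteq> \<Union>(\<B> - {p})" using pqr by blast
      moreover have "p \<union> r \<subseteq> \<Union>(\<B> - {q})" using pqr by blast
      moreover have "p \<union> q \<subseteq> \<Union>(\<B> - {r})" using pqr by blast
      ultimately have "p \<subseteq> \<Union>(\<B> - {p}) \<or> q \<subseteq> \<Union>(\<B> - {q}) \<or> r \<subseteq> \<Union>(\<B> - {r})"
        by (meson subset_trans)
      moreover have "p \<in> \<B>" "q \<in> \<B>" "r \<in> \<B>" using pqr by auto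
      ultimately show False using False by meson
    qed
    then show ?thesis by blast
  qed
qed

lemma sum_overlap_bound:
  fixes M :: "real measure"
  assumes "finite \<B>" "\<B> \<subseteq> sets M" "E \<in> sets M" "\<forall>x. card {B\<in>\<B>. x \<in> B} \<le> 2"
  shows "(\<Sum>B\<in>\<B>. emeasure M (B \<inter> E)) \<le> 2 * emeasure M E"
proof -
  have "(\<Sum>B\<in>\<B>. emeasure M (B \<inter> E)) = (\<Sum>B\<in>\<B>. \<integral>\<^sup>+x. indicator (B \<inter> E) x \<partial>M)"
    using assms by (intro sum.cong) (auto intro!: nn_integral_indicator[symmetric])
  also have "\<dots> = \<integral>\<^sup>+x. (\<Sum>B\<in>\<B>. indicator (B \<inter> E) x) \<partial>M"
    using assms by (intro nn_integral_sum[symmetric]) auto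
  also have "\<dots> \<le> \<integral>\<^sup>+x. 2 * indicator E x \<partial>M"
  proof (rule nn_integral_mono)
    fix x
    show "(\<Sum>B\<in>\<B>. indicator (B \<inter> E) x :: ennreal) \<le> 2 * indicator E x"
    proof (cases "x \<in> E")
      case True
      have "(\<Sum>B\<in>\<B>. indicator (B \<inter> E) x :: ennreal) = (\<Sum>B\<in>\<B>. if x \<in> B then 1 else 0)"
        using True by (intro sum.cong) (auto simp: indicator_def)
      also have "\<dots> = (\<Sum>B\<in>{B\<in>\<B>. x \<in> B}. 1)"
        by (rule sum.inter_filter[symmetric]) fact
      also have "\<dots> = of_nat (card {B\<in>\<B>. x \<in> B})" by simp
      also have "\<dots> \<le> of_nat 2" using assms(4) by (intro of_nat_mono) auto
      finally show ?thesis using True by simp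
    next
      case False
      then show ?thesis by (simp add: indicator_def)
    qed
  qed
  also have "\<dots> = 2 * emeasure M E" using assms(3) by (rule nn_integral_cmult_indicator)
  finally show ?thesis .
qed

lemma sum_overlap_bound_real:
  fixes M :: "real measure"
  assumes "finite_measure M" "finite \<B>" "\<B> \<subseteq> sets M" "E \<in> sets M" "\<forall>x. card {B\<in>\<B>. x \<in> B} \<le> 2"
  shows "(\<Sum>B\<in>\<B>. measure M (B \<inter> E)) \<le> 2 * measure M E"
proof -
  interpret finite_measure M by fact
  have "ennreal (\<Sum>B\<in>\<B>. measure M (B \<inter> E)) = (\<Sum>B\<in>\<B>. emeasure M (B \<inter> E))"
    by (simp add: emeasure_eq_measure)
  also have "\<dots> \<le> 2 * emeasure M E" by (rule sum_overlap_bound) fact+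
  also have "\<dots> = ennreal (2 * measure M E)" by (simp add: emeasure_eq_measure ennreal_mult)
  finally show ?thesis by (subst (asm) ennreal_le_iff) auto
qed

lemma maximal_compact:
  fixes M :: "real measure"
  assumes M: "sets M = sets borel" "finite_measure M" and E: "E \<in> sets borel"
    and C: "compact C" and l: "l \<ge> 0"
    and H: "\<forall>x\<in>C. \<exists>r>0. l * measure M (ball x r) \<le> measure M (ball x r \<inter> E)"
  shows "l * measure M C \<le> 2 * measure M E"
proof -
  interpret finite_measure M by fact
  obtain r where r: "\<forall>x\<in>C. r x > 0 \<and> l * measure M (ball x (r x)) \<le> measure M (ball x (r x) \<inter> E)"
    using H by metis
  have "C \<subseteq> (\<Union>x\<in>C. ball x (r x))" using r by auto
  then obtain T where T: "T \<subseteq> C" "finite T" "C \<subseteq> (\<Union>x\<in>T. ball x (r x))"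
    using compactE_image[OF C, of C "\<lambda>x. ball x (r x)"] by auto
  define \<B> where "\<B> = (\<lambda>x. ball x (r x)) ` T"
  have fB: "finite \<B>" using T by (simp add: \<B>_def)
  have oB: "\<forall>B\<in>\<B>. is_oint B" unfolding \<B>_def is_oint_def
    by (auto simp: ball_eq_greaterThanLessThan)
  obtain \<B>' where B': "\<B>' \<subseteq> \<B>" "\<Union>\<B>' = \<Union>\<B>" "\<forall>x. card {B\<in>\<B>'. x \<in> B} \<le> 2"
    using overlap2[OF fB oB] by blast
  have fB': "finite \<B>'" using B'(1) fB by (rule finite_subset)
  have sB': "\<B>' \<subseteq> sets M" using B'(1) M(1) unfolding \<B>_def by auto
  have each: "l * measure M B \<le> measure M (B \<inter> E)" if hB: "B \<in> \<B>'" for B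
  proof -
    obtain x where "x \<in> T" "B = ball x (r x)" using hB B'(1) unfolding \<B>_def by auto
    then show ?thesis using r T(1) by auto
  qed
  have "C \<subseteq> \<Union>\<B>'" using T(3) B'(2) unfolding \<B>_def by auto
  then have "measure M C \<le> measure M (\<Union>\<B>')"
    using sB' fB' C M(1) by (intro finite_measure_mono) (auto intro: borel_compact)
  also have "\<dots> \<le> (\<Sum>B\<in>\<B>'. measure M B)"
    using fB' sB' by (intro measure_Union_le) auto
  finally have "l * measure M C \<le> l * (\<Sum>B\<in>\<B>'. measure M B)" using l by (rule mult_left_mono)
  also have "\<dots> = (\<Sum>B\<in>\<B>'. l * measure M B)" by (simp add: sum_distrib_left)
  also have "\<dots> \<le> (\<Sum>B\<in>\<B>'. measure M (B \<inter> E))" using each by (intro sum_mono) auto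
  also have "\<dots> \<le> 2 * measure M E"
    using E M by (intro sum_overlap_bound_real[OF M(2) fB' sB' _ B'(3)]) auto
  finally show ?thesis .
qed

lemma maximal_borel:
  fixes M :: "real measure"
  assumes M: "sets M = sets borel" "finite_measure M" and E: "E \<in> sets borel"
    and S: "S \<in> sets borel" and l: "l \<ge> 0"
    and H: "\<forall>x\<in>S. \<exists>r>0. l * measure M (ball x r) \<le> measure M (ball x r \<inter> E)"
  shows "l * measure M S \<le> 2 * measure M E"
proof -
  interpret finite_measure M by fact
  have "emeasure M S = (SUP K\<in>{K. K \<subseteq> S \<and> compact K}. emeasure M K)"
    using M S by (intro inner_regular) auto
  then have "ennreal l * emeasure M S = (SUP K\<in>{K. K \<subseteq> S \<and> compact K}. ennreal l * emeasure M K)"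
    by (simp add: SUP_mult_left_ennreal)
  also have "\<dots> \<le> ennreal (2 * measure M E)"
  proof (rule SUP_least)
    fix K assume K: "K \<in> {K. K \<subseteq> S \<and> compact K}"
    have "l * measure M K \<le> 2 * measure M E"
      using K H by (intro maximal_compact[OF M E _ l]) auto
    then show "ennreal l * emeasure M K \<le> ennreal (2 * measure M E)"
      using l by (simp add: emeasure_eq_measure flip: ennreal_mult)
  qed
  finally show ?thesis using l by (simp add: emeasure_eq_measure flip: ennreal_mult)
qed

lemma ball_sub:
  fixes x y :: real
  assumes "dist x y + s \<le> r"
  shows "ball y s \<subseteq> ball x r"
proof
  fix z assume "z \<in> ball y s"
  then have "dist y z < s" by simp
  moreover have "dist x z \<le> dist x y + dist y z" by (rule dist_triangle)
  ultimately show "z \<in> ball x r" using assms by simp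
qed

lemma left_cont_ball:
  fixes M :: "real measure"
  assumes M: "sets M = sets borel" "finite_measure M" and E: "E \<in> sets borel"
    and r: "r > 0" and c: "c < measure M (ball x r \<inter> E)"
  shows "\<exists>s. 0 < s \<and> s < r \<and> c < measure M (ball x s \<inter> E)"
proof -
  interpret finite_measure M by fact
  define A where "A i = ball x (r - r / real (i+2)) \<inter> E" for i :: nat
  have "A i \<in> sets borel" for i unfolding A_def by (rule sets.Int[OF borel_open[OF open_ball] E])
  then have A_sets: "range A \<subseteq> sets M" by (simp add: M(1) image_subset_iff)
  have rr: "r / real (Suc i + 2) \<le> r / real (i + 2)" for i using r by (intro divide_left_mono) auto
  have "incseq A"
  proof (rule incseq_SucI)
    fix i
    have "dist x x + (r - r / real (i + 2)) \<le> r - r / real (Suc i + 2)" using rr[of i] by simp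
    then have "ball x (r - r / real (i + 2)) \<subseteq> ball x (r - r / real (Suc i + 2))" by (rule ball_sub)
    then show "A i \<subseteq> A (Suc i)" unfolding A_def by blast
  qed
  have U: "(\<Union>i. A i) = ball x r \<inter> E"
  proof
    show "(\<Union>i. A i) \<subseteq> ball x r \<inter> E"
    proof
      fix y assume "y \<in> (\<Union>i. A i)"
      then obtain i where i: "y \<in> A i" by blast
      have "r / real (i+2) \<ge> 0" using r by simp
      then have "dist x x + (r - r / real (i + 2)) \<le> r" by simp
      then have "ball x (r - r / real (i + 2)) \<subseteq> ball x r" by (rule ball_sub)
      then show "y \<in> ball x r \<inter> E" using i unfolding A_def by blast
    qed
  next
    show "ball x r \<inter> E \<subseteq> (\<Union>i. A i)"
    proof
      fix y assume y: "y \<in> ball x r \<inter> E"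
      then have d: "dist x y < r" by auto
      obtain n :: nat where n: "r / (r - dist x y) < real n" using reals_Archimedean2 by blast
      have pos: "r - dist x y > 0" using d by simp
      have "r < real n * (r - dist x y)" using n pos by (simp add: divide_less_eq)
      also have "\<dots> \<le> real (n+2) * (r - dist x y)" using pos by (intro mult_right_mono) auto
      finally have "r / real (n+2) < r - dist x y" by (simp add: divide_less_eq mult.commute)
      then have "y \<in> A n" using y by (simp add: A_def)
      then show "y \<in> (\<Union>i. A i)" by blast
    qed
  qed
  have "(\<lambda>i. measure M (A i)) \<longlonglongrightarrow> measure M (\<Union>i. A i)"
    by (rule finite_Lim_measure_incseq[OF A_sets \<open>incseq A\<close>])
  then have "(\<lambda>i. measure M (A i)) \<longlonglongrightarrow> measure M (ball x r \<inter> E)" by (simp add: U)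
  from order_tendstoD(1)[OF this c] obtain i where ci: "c < measure M (A i)"
    by (auto simp: eventually_sequentially)
  have "r * 1 < r * real (i+2)" using r by (intro mult_strict_left_mono) auto
  then have "r / real (i+2) < r" by (simp add: divide_less_eq)
  moreover have "r / real (i+2) > 0" using r by simp
  ultimately have "0 < r - r / real (i+2)" "r - r / real (i+2) < r" by linarith+
  with ci show ?thesis unfolding A_def by (intro exI[of _ "r - r / real (i+2)"]) simp
qed

lemma open_maxset:
  fixes M :: "real measure"
  assumes M: "sets M = sets borel" "finite_measure M" and E: "E \<in> sets borel" and l: "l \<ge> 0"
  shows "open {x. \<exists>r>0. l * measure M (ball x r) < measure M (ball x r \<inter> E)}"
  unfolding open_contains_ball
proof (intro ballI)
  interpret finite_measure M by fact
  fix x assume "x \<in> {x. \<exists>r>0. l * measure M (ball x r) < measure M (ball x r \<inter> E)}"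
  then obtain r where r: "r > 0" "l * measure M (ball x r) < measure M (ball x r \<inter> E)" by auto
  obtain s where s: "0 < s" "s < r" "l * measure M (ball x r) < measure M (ball x s \<inter> E)"
    using left_cont_ball[OF M E r(1) r(2)] by blast
  define d where "d = (r - s) / 2"
  have d: "d > 0" using s by (simp add: d_def)
  have "ball x d \<subseteq> {x. \<exists>r>0. l * measure M (ball x r) < measure M (ball x r \<inter> E)}"
  proof
    fix y assume y: "y \<in> ball x d"
    have sub1: "ball x s \<subseteq> ball y (s + d)" using y
      by (intro ball_sub) (auto simp: dist_commute)
    have "dist x y < d" using y by simp
    moreover have "2 * d = r - s" unfolding d_def by simp
    ultimately have "dist x y + (s + d) \<le> r" by linarith
    then have sub2: "ball y (s + d) \<subseteq> ball x r" by (rule ball_sub)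
    have "l * measure M (ball y (s + d)) \<le> l * measure M (ball x r)"
      using sub2 l by (intro mult_left_mono finite_measure_mono) (simp_all add: M(1))
    also have "\<dots> < measure M (ball x s \<inter> E)" by (rule s(3))
    also have "\<dots> \<le> measure M (ball y (s + d) \<inter> E)"
    proof (rule finite_measure_mono)
      show "ball x s \<inter> E \<subseteq> ball y (s + d) \<inter> E" using sub1 by blast
      show "ball y (s + d) \<inter> E \<in> sets M" using E by (simp add: M(1))
    qed
    finally show "y \<in> {x. \<exists>r>0. l * measure M (ball x r) < measure M (ball x r \<inter> E)}"
      using s d by (intro CollectI exI[of _ "s + d"]) auto
  qed
  then show "\<exists>e>0. ball x e \<subseteq> {x. \<exists>r>0. l * measure M (ball x r) < measure M (ball x r \<inter> E)}"
    using d by blast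
qed

lemma support_null:
  fixes M :: "real measure"
  assumes M: "sets M = sets borel" "finite_measure M"
  shows "{x. \<exists>r>0. measure M (ball x r) = 0} \<in> null_sets M"
proof -
  interpret finite_measure M by fact
  let ?Z = "{x. \<exists>r>0. measure M (ball x r) = 0}"
  have "open ?Z" unfolding open_contains_ball
  proof (intro ballI)
    fix x assume "x \<in> ?Z"
    then obtain r where r: "r > 0" "measure M (ball x r) = 0" by auto
    have "ball x (r/2) \<subseteq> ?Z"
    proof
      fix y assume y: "y \<in> ball x (r/2)"
      have "ball y (r/2) \<subseteq> ball x r" using y by (intro ball_sub) auto
      then have "measure M (ball y (r/2)) \<le> measure M (ball x r)"
        by (intro finite_measure_mono) (simp_all add: M(1))
      then have "measure M (ball y (r/2)) = 0" using r measure_nonneg[of M "ball y (r/2)"] by linarith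
      then show "y \<in> ?Z" using r by (intro CollectI exI[of _ "r/2"]) auto
    qed
    then show "\<exists>e>0. ball x e \<subseteq> ?Z" using r by (intro exI[of _ "r/2"]) auto
  qed
  then have Zb: "?Z \<in> sets borel" by auto
  have "1 * measure M ?Z \<le> 2 * measure M {}"
    by (rule maximal_borel[OF M _ Zb]) auto
  then have "measure M ?Z = 0" using measure_nonneg[of M ?Z] by simp
  then show ?thesis using Zb M by (simp add: emeasure_eq_measure null_sets_def)
qed

lemma inner_approx:
  fixes M :: "real measure"
  assumes M: "sets M = sets borel" "finite_measure M" and F: "F \<in> sets borel" and e: "e > 0"
  shows "\<exists>K. K \<subseteq> F \<and> compact K \<and> measure M (F - K) < e"
proof (cases "measure M F < e")
  case True
  then show ?thesis by (intro exI[of _ "{}"]) auto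
next
  case False
  interpret finite_measure M by fact
  have eq: "emeasure M F = (SUP K\<in>{K. K \<subseteq> F \<and> compact K}. emeasure M K)"
    using M F by (intro inner_regular) auto
  have "ennreal (measure M F - e) < emeasure M F"
    using False e by (simp add: emeasure_eq_measure ennreal_less_iff)
  then obtain K where K: "K \<subseteq> F" "compact K" "ennreal (measure M F - e) < emeasure M K"
    unfolding eq less_SUP_iff by blast
  have "measure M F - e < measure M K"
    using K(3) False by (simp add: emeasure_eq_measure ennreal_less_iff)
  moreover have "measure M (F - K) = measure M F - measure M K"
    using K F by (intro finite_measure_Diff) (simp_all add: M(1) borel_compact)
  ultimately show ?thesis using K by (intro exI[of _ K]) auto
qed

lemma dens_zero_l:
  fixes M :: "real measure"
  assumes M: "sets M = sets borel" "finite_measure M" and F: "F \<in> sets borel" and l: "l > 0"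
  shows "\<exists>N\<in>null_sets M. \<forall>x. x \<notin> F \<longrightarrow> x \<notin> N \<longrightarrow>
           (\<exists>\<delta>>0. \<forall>r. 0 < r \<longrightarrow> r < \<delta> \<longrightarrow> measure M (ball x r \<inter> F) \<le> l * measure M (ball x r))"
proof -
  interpret finite_measure M by fact
  have "\<forall>m::nat. \<exists>K. K \<subseteq> F \<and> compact K \<and> measure M (F - K) < 1 / real (Suc m)"
    using inner_approx[OF M F] by auto
  then obtain K where K: "\<And>m. K m \<subseteq> F" "\<And>m. compact (K m)" "\<And>m. measure M (F - K m) < 1 / real (Suc m)"
    by metis
  define S where "S m = {x. \<exists>r>0. l * measure M (ball x r) < measure M (ball x r \<inter> (F - K m))}" for m
  have Kb: "K m \<in> sets borel" for m using K(2) by (auto intro: borel_compact)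
  have FKb: "F - K m \<in> sets borel" for m using F Kb by auto
  have Sopen: "open (S m)" for m unfolding S_def using l by (intro open_maxset[OF M FKb]) auto
  have Sb: "S m \<in> sets borel" for m using Sopen by auto
  have Sbound: "l * measure M (S m) \<le> 2 * measure M (F - K m)" for m
    using l by (intro maximal_borel[OF M FKb Sb]) (auto simp: S_def)
  define N where "N = (\<Inter>m. S m)"
  have Nb: "N \<in> sets borel" unfolding N_def using Sb by auto
  have Nsmall: "l * measure M N < 2 / real (Suc m)" for m
  proof -
    have "measure M N \<le> measure M (S m)" unfolding N_def using Sb
      by (intro finite_measure_mono) (auto simp: M(1))
    then have "l * measure M N \<le> l * measure M (S m)" using l by simp
    also have "\<dots> \<le> 2 * measure M (F - K m)" by (rule Sbound)
    also have "\<dots> < 2 / real (Suc m)" using K(3)[of m] by simp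
    finally show ?thesis .
  qed
  have "measure M N = 0"
  proof (rule ccontr)
    assume "measure M N \<noteq> 0"
    then have "measure M N > 0" using measure_nonneg[of M N] by linarith
    then have pos: "l * measure M N > 0" using l by simp
    obtain m :: nat where m: "2 / (l * measure M N) < real m" using reals_Archimedean2 by blast
    have "2 / (l * measure M N) < real (Suc m)" using m by simp
    then have "2 < real (Suc m) * (l * measure M N)" using pos by (simp add: divide_less_eq)
    then have "2 / real (Suc m) < l * measure M N" by (simp add: divide_less_eq mult.commute)
    then show False using Nsmall[of m] by simp
  qed
  then have Nnull: "N \<in> null_sets M" using Nb M by (simp add: emeasure_eq_measure null_sets_def)
  have "\<exists>\<delta>>0. \<forall>r. 0 < r \<longrightarrow> r < \<delta> \<longrightarrow> measure M (ball x r \<inter> F) \<le> l * measure M (ball x r)"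
    if x: "x \<notin> F" "x \<notin> N" for x
  proof -
    obtain m where xm: "x \<notin> S m" using x(2) unfolding N_def by blast
    have "x \<notin> K m" using x(1) K(1) by blast
    moreover have "open (- K m)" using K(2) compact_imp_closed by auto
    ultimately obtain \<delta> where \<delta>: "\<delta> > 0" "ball x \<delta> \<subseteq> - K m"
      unfolding open_contains_ball by blast
    have "measure M (ball x r \<inter> F) \<le> l * measure M (ball x r)" if r: "0 < r" "r < \<delta>" for r
    proof -
      have "dist x x + r \<le> \<delta>" using r by simp
      then have "ball x r \<subseteq> ball x \<delta>" by (rule ball_sub)
      then have "ball x r \<inter> F = ball x r \<inter> (F - K m)" using \<delta>(2) by blast
      moreover have "\<not> (l * measure M (ball x r) < measure M (ball x r \<inter> (F - K m)))"
        using xm r unfolding S_def by blast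
      ultimately show ?thesis by (simp add: not_less)
    qed
    then show ?thesis using \<delta>(1) by blast
  qed
  then show ?thesis using Nnull by blast
qed

lemma dens_zero:
  fixes M :: "real measure"
  assumes M: "sets M = sets borel" "finite_measure M" and F: "F \<in> sets borel"
  shows "\<exists>N\<in>null_sets M. \<forall>x. x \<notin> F \<longrightarrow> x \<notin> N \<longrightarrow> (\<forall>l>0.
           (\<exists>\<delta>>0. \<forall>r. 0 < r \<longrightarrow> r < \<delta> \<longrightarrow> measure M (ball x r \<inter> F) \<le> l * measure M (ball x r)))"
proof -
  have "\<forall>k::nat. \<exists>N\<in>null_sets M. \<forall>x. x \<notin> F \<longrightarrow> x \<notin> N \<longrightarrow>
           (\<exists>\<delta>>0. \<forall>r. 0 < r \<longrightarrow> r < \<delta> \<longrightarrow> measure M (ball x r \<inter> F) \<le> (1 / real (Suc k)) * measure M (ball x r))"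
    by (intro allI dens_zero_l[OF M F]) simp
  then obtain N where N: "\<And>k. N k \<in> null_sets M" "\<And>k x. x \<notin> F \<Longrightarrow> x \<notin> N k \<Longrightarrow>
           (\<exists>\<delta>>0. \<forall>r. 0 < r \<longrightarrow> r < \<delta> \<longrightarrow> measure M (ball x r \<inter> F) \<le> (1 / real (Suc k)) * measure M (ball x r))"
    by metis
  have "(\<Union>k. N k) \<in> null_sets M" using N(1) by auto
  moreover have "\<exists>\<delta>>0. \<forall>r. 0 < r \<longrightarrow> r < \<delta> \<longrightarrow> measure M (ball x r \<inter> F) \<le> l * measure M (ball x r)"
    if x: "x \<notin> F" "x \<notin> (\<Union>k. N k)" and l: "l > 0" for x l
  proof -
    obtain k :: nat where k: "1 / l < real k" using reals_Archimedean2 by blast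
    have "1 / real (Suc k) < l" using k l by (simp add: divide_less_eq field_simps)
    obtain \<delta> where \<delta>: "\<delta> > 0" "\<forall>r. 0 < r \<longrightarrow> r < \<delta> \<longrightarrow> measure M (ball x r \<inter> F) \<le> (1 / real (Suc k)) * measure M (ball x r)"
      using N(2)[of x k] x by blast
    have "measure M (ball x r \<inter> F) \<le> l * measure M (ball x r)" if "0 < r" "r < \<delta>" for r
    proof -
      have "measure M (ball x r \<inter> F) \<le> (1 / real (Suc k)) * measure M (ball x r)" using \<delta>(2) that by blast
      also have "\<dots> \<le> l * measure M (ball x r)"
        using \<open>1 / real (Suc k) < l\<close> by (intro mult_right_mono) auto
      finally show ?thesis .
    qed
    then show ?thesis using \<delta>(1) by blast
  qed
  ultimately show ?thesis by blast
qed

locale lp_setup =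
  fixes M P :: "real measure" and a :: "real \<Rightarrow> real"
  assumes Msets: "sets M = sets borel" and Mfin: "finite_measure M"
    and Psets: "sets P = sets borel"
    and Pdens: "\<And>S. S \<in> sets borel \<Longrightarrow> emeasure P S = (\<integral>\<^sup>+y. ennreal (a y) * indicator S y \<partial>M)"
    and a_meas: "a \<in> borel_measurable borel" and a_bnd: "\<And>y. 0 \<le> a y" "\<And>y. a y \<le> 1"
begin

lemma P_upper_enn:
  assumes S: "S \<in> sets borel" and q: "\<And>y. y \<in> S \<Longrightarrow> a y \<le> q"
  shows "emeasure P S \<le> ennreal q * emeasure M S"
proof -
  have "emeasure P S = (\<integral>\<^sup>+y. ennreal (a y) * indicator S y \<partial>M)" by (rule Pdens[OF S])
  also have "\<dots> \<le> (\<integral>\<^sup>+y. ennreal q * indicator S y \<partial>M)"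
    by (intro nn_integral_mono) (simp add: indicator_def q ennreal_leI)
  also have "\<dots> = ennreal q * emeasure M S"
    using S by (intro nn_integral_cmult_indicator) (simp add: Msets)
  finally show ?thesis .
qed

lemma P_lower_enn:
  assumes S: "S \<in> sets borel" and q: "\<And>y. y \<in> S \<Longrightarrow> q \<le> a y"
  shows "ennreal q * emeasure M S \<le> emeasure P S"
proof -
  have "ennreal q * emeasure M S = (\<integral>\<^sup>+y. ennreal q * indicator S y \<partial>M)"
    using S by (intro nn_integral_cmult_indicator[symmetric]) (simp add: Msets)
  also have "\<dots> \<le> (\<integral>\<^sup>+y. ennreal (a y) * indicator S y \<partial>M)"
    by (intro nn_integral_mono) (simp add: indicator_def q ennreal_leI)
  also have "\<dots> = emeasure P S" by (rule Pdens[OF S, symmetric])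
  finally show ?thesis .
qed

lemma P_le_M: "S \<in> sets borel \<Longrightarrow> emeasure P S \<le> emeasure M S"
  using P_upper_enn[of S 1] a_bnd by simp

lemma Pfin: "finite_measure P"
proof
  interpret finite_measure M by (rule Mfin)
  have "space P = UNIV" using Psets by (metis sets_eq_imp_space_eq space_borel)
  then have "emeasure P (space P) \<le> emeasure M UNIV" using P_le_M[of UNIV] by simp
  also have "\<dots> < \<infinity>" using emeasure_finite[of UNIV] by (simp add: less_top[symmetric])
  finally show "emeasure P (space P) \<noteq> \<infinity>" by simp
qed

lemma P_upper:
  assumes S: "S \<in> sets borel" and q: "\<And>y. y \<in> S \<Longrightarrow> a y \<le> q" and q0: "0 \<le> q"
  shows "measure P S \<le> q * measure M S"
proof -
  interpret finite_measure M by (rule Mfin)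
  interpret P: finite_measure P by (rule Pfin)
  have "ennreal (measure P S) \<le> ennreal (q * measure M S)"
    using P_upper_enn[OF S q] q0 by (simp add: emeasure_eq_measure P.emeasure_eq_measure ennreal_mult)
  then show ?thesis using q0 by (simp add: ennreal_le_iff)
qed

lemma P_lower:
  assumes S: "S \<in> sets borel" and q: "\<And>y. y \<in> S \<Longrightarrow> q \<le> a y" and q0: "0 \<le> q"
  shows "q * measure M S \<le> measure P S"
proof -
  interpret finite_measure M by (rule Mfin)
  interpret P: finite_measure P by (rule Pfin)
  have "ennreal (q * measure M S) \<le> ennreal (measure P S)"
    using P_lower_enn[OF S q] q0 by (simp add: emeasure_eq_measure P.emeasure_eq_measure ennreal_mult)
  then show ?thesis by (simp add: ennreal_le_iff)
qed

lemma P_le_M_real: "S \<in> sets borel \<Longrightarrow> measure P S \<le> measure M S"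
  using P_upper[of S 1] a_bnd by simp

end

context lp_setup begin

lemma lower_step:
  assumes A: "A \<in> sets borel" "A \<subseteq> ball x \<rho>" and c: "c > 0"
    and cm: "c * measure M (ball x \<rho>) \<le> measure M A" and Bpos: "0 < measure M (ball x \<rho>)"
    and q: "0 < q" "q \<le> 1" and l: "l \<ge> 0"
    and F: "measure M (ball x \<rho> \<inter> {y. a y \<le> q}) \<le> l * measure M (ball x \<rho>)"
  shows "q - l / c \<le> measure P A / measure M A"
proof -
  interpret finite_measure M by (rule Mfin)
  interpret P: finite_measure P by (rule Pfin)
  have [measurable]: "a \<in> borel_measurable borel" by (rule a_meas)
  define F where "F = {y. a y \<le> q}"
  have Fb: "F \<in> sets borel" unfolding F_def by measurable
  define m where "m = measure M A"
  have mpos: "m > 0" unfolding m_def using cm c Bpos by (smt (verit) mult_pos_pos)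
  have mB: "measure M (ball x \<rho>) \<le> m / c" using cm c unfolding m_def by (simp add: pos_le_divide_eq mult.commute)
  have "measure M (A \<inter> F) \<le> measure M (ball x \<rho> \<inter> F)"
    using A Fb by (intro finite_measure_mono) (auto simp: Msets)
  also have "\<dots> \<le> l * measure M (ball x \<rho>)" using F unfolding F_def .
  also have "\<dots> \<le> l * (m / c)" using mB l by (rule mult_left_mono)
  finally have AF: "measure M (A \<inter> F) \<le> l * (m / c)" .
  have "measure M (A - F) = m - measure M (A \<inter> F)"
    unfolding m_def using A Fb by (intro finite_measure_Diff') (auto simp: Msets)
  then have "m - l * (m / c) \<le> measure M (A - F)" using AF by linarith
  then have "q * (m - l * (m / c)) \<le> q * measure M (A - F)" using q by simp
  also have "\<dots> \<le> measure P (A - F)"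
    using A Fb q by (intro P_lower) (auto simp: F_def)
  also have "\<dots> \<le> measure P A"
    using A Fb by (intro P.finite_measure_mono) (auto simp: Psets)
  finally have h1: "q * (m - l * (m / c)) \<le> measure P A" .
  have "0 \<le> l * (m / c)" using l mpos c by simp
  then have "q * (l * (m / c)) \<le> l * (m / c)" using q by (intro mult_left_le_one_le) auto
  then have "(q - l / c) * m \<le> q * (m - l * (m / c))" by (simp add: algebra_simps)
  with h1 have "(q - l / c) * m \<le> measure P A" by linarith
  then show ?thesis using mpos unfolding m_def by (simp add: pos_le_divide_eq)
qed

lemma upper_step:
  assumes A: "A \<in> sets borel" "A \<subseteq> ball x \<rho>" and c: "c > 0"
    and cm: "c * measure M (ball x \<rho>) \<le> measure M A" and Bpos: "0 < measure M (ball x \<rho>)"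
    and q: "0 \<le> q" and l: "l \<ge> 0"
    and G: "measure M (ball x \<rho> \<inter> {y. q \<le> a y}) \<le> l * measure M (ball x \<rho>)"
  shows "measure P A / measure M A \<le> q + l / c"
proof -
  interpret finite_measure M by (rule Mfin)
  interpret P: finite_measure P by (rule Pfin)
  have [measurable]: "a \<in> borel_measurable borel" by (rule a_meas)
  define G where "G = {y. q \<le> a y}"
  have Gb: "G \<in> sets borel" unfolding G_def by measurable
  define m where "m = measure M A"
  have mpos: "m > 0" unfolding m_def using cm c Bpos by (smt (verit) mult_pos_pos)
  have mB: "measure M (ball x \<rho>) \<le> m / c" using cm c unfolding m_def by (simp add: pos_le_divide_eq mult.commute)
  have "measure P (A \<inter> G) \<le> measure M (A \<inter> G)" using A Gb by (intro P_le_M_real) auto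
  also have "\<dots> \<le> measure M (ball x \<rho> \<inter> G)"
    using A Gb by (intro finite_measure_mono) (auto simp: Msets)
  also have "\<dots> \<le> l * measure M (ball x \<rho>)" using G unfolding G_def .
  also have "\<dots> \<le> l * (m / c)" using mB l by (rule mult_left_mono)
  finally have AG: "measure P (A \<inter> G) \<le> l * (m / c)" .
  have "measure P (A - G) \<le> q * measure M (A - G)"
    using A Gb q by (intro P_upper) (auto simp: G_def)
  also have "\<dots> \<le> q * m"
    unfolding m_def using A Gb q by (intro mult_left_mono finite_measure_mono) (auto simp: Msets)
  finally have AmG: "measure P (A - G) \<le> q * m" .
  have "measure P (A - G) = measure P A - measure P (A \<inter> G)"
    using A Gb by (intro P.finite_measure_Diff') (auto simp: Psets)
  then have "measure P A \<le> l * (m / c) + q * m" using AG AmG by linarith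
  also have "\<dots> = (q + l / c) * m" by (simp add: algebra_simps)
  finally show ?thesis using mpos unfolding m_def by (simp add: pos_divide_le_eq)
qed

end

context lp_setup begin

definition good_seq :: "real \<Rightarrow> (nat \<Rightarrow> real set) \<Rightarrow> (nat \<Rightarrow> real) \<Rightarrow> real \<Rightarrow> nat \<Rightarrow> bool" where
  "good_seq x A \<rho> c j \<longleftrightarrow> A j \<in> sets borel \<and> A j \<subseteq> ball x (\<rho> j) \<and> 0 < \<rho> j \<and>
      c * measure M (ball x (\<rho> j)) \<le> measure M (A j)"

lemma lebesgue_pt:
  "\<exists>N\<in>null_sets M. \<forall>x. x \<notin> N \<longrightarrow> (\<forall>r>0. 0 < measure M (ball x r)) \<and>
     (\<forall>A \<rho> c. 0 < c \<longrightarrow> \<rho> \<longlonglongrightarrow> 0 \<longrightarrow> (\<forall>\<^sub>F j in sequentially. good_seq x A \<rho> c j) \<longrightarrow>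
        ((\<lambda>j. measure P (A j) / measure M (A j)) \<longlonglongrightarrow> a x))"
proof -
  interpret finite_measure M by (rule Mfin)
  have [measurable]: "a \<in> borel_measurable borel" by (rule a_meas)
  have Fb: "{y. a y \<le> q} \<in> sets borel" for q by measurable
  have Gb: "{y. q \<le> a y} \<in> sets borel" for q by measurable
  have "\<forall>q. \<exists>N\<in>null_sets M. \<forall>x. x \<notin> {y. a y \<le> q} \<longrightarrow> x \<notin> N \<longrightarrow> (\<forall>l>0.
           (\<exists>\<delta>>0. \<forall>r. 0 < r \<longrightarrow> r < \<delta> \<longrightarrow> measure M (ball x r \<inter> {y. a y \<le> q}) \<le> l * measure M (ball x r)))"
    by (intro allI dens_zero[OF Msets Mfin Fb])
  then obtain NF where NF: "\<And>q. NF q \<in> null_sets M"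
    "\<And>q x l. a x > q \<Longrightarrow> x \<notin> NF q \<Longrightarrow> l > 0 \<Longrightarrow>
           (\<exists>\<delta>>0. \<forall>r. 0 < r \<longrightarrow> r < \<delta> \<longrightarrow> measure M (ball x r \<inter> {y. a y \<le> q}) \<le> l * measure M (ball x r))"
    by (metis mem_Collect_eq not_le)
  have "\<forall>q. \<exists>N\<in>null_sets M. \<forall>x. x \<notin> {y. q \<le> a y} \<longrightarrow> x \<notin> N \<longrightarrow> (\<forall>l>0.
           (\<exists>\<delta>>0. \<forall>r. 0 < r \<longrightarrow> r < \<delta> \<longrightarrow> measure M (ball x r \<inter> {y. q \<le> a y}) \<le> l * measure M (ball x r)))"
    by (intro allI dens_zero[OF Msets Mfin Gb])
  then obtain NG where NG: "\<And>q. NG q \<in> null_sets M"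
    "\<And>q x l. a x < q \<Longrightarrow> x \<notin> NG q \<Longrightarrow> l > 0 \<Longrightarrow>
           (\<exists>\<delta>>0. \<forall>r. 0 < r \<longrightarrow> r < \<delta> \<longrightarrow> measure M (ball x r \<inter> {y. q \<le> a y}) \<le> l * measure M (ball x r))"
    by (metis mem_Collect_eq not_le)
  define Z0 where "Z0 = {x. \<exists>r>0. measure M (ball x r) = 0}"
  have Z0: "Z0 \<in> null_sets M" unfolding Z0_def by (rule support_null[OF Msets Mfin])
  define N where "N = Z0 \<union> (\<Union>q\<in>\<rat>. NF q) \<union> (\<Union>q\<in>\<rat>. NG q)"
  have Nnull: "N \<in> null_sets M" unfolding N_def
    using Z0 NF(1) NG(1) countable_rat by (intro null_sets.Un null_sets_UN') auto
  have main: "(\<forall>r>0. 0 < measure M (ball x r)) \<and>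
     (\<forall>A \<rho> c. 0 < c \<longrightarrow> \<rho> \<longlonglongrightarrow> 0 \<longrightarrow> (\<forall>\<^sub>F j in sequentially. good_seq x A \<rho> c j) \<longrightarrow>
        ((\<lambda>j. measure P (A j) / measure M (A j)) \<longlonglongrightarrow> a x))" if xN: "x \<notin> N" for x
  proof (intro conjI allI impI)
    have xZ: "x \<notin> Z0" using xN unfolding N_def by blast
    show pos: "0 < measure M (ball x r)" if "r > 0" for r
    proof -
      have "measure M (ball x r) \<noteq> 0" using xZ that unfolding Z0_def by blast
      then show ?thesis using measure_nonneg[of M "ball x r"] by linarith
    qed
    fix A \<rho> and c :: real
    assume c: "0 < c" and \<rho>: "\<rho> \<longlonglongrightarrow> 0" and ev: "\<forall>\<^sub>F j in sequentially. good_seq x A \<rho> c j"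
    define Q where "Q j = measure P (A j) / measure M (A j)" for j
    show "(\<lambda>j. measure P (A j) / measure M (A j)) \<longlonglongrightarrow> a x"
      unfolding tendsto_iff
    proof (intro allI impI)
      fix e :: real assume e: "e > 0"
      obtain q1 where q1: "q1 \<in> \<rat>" "a x - e < q1" "q1 < a x"
        using Rats_dense_in_real[of "a x - e" "a x"] e by auto
      obtain q2 where q2: "q2 \<in> \<rat>" "a x < q2" "q2 < a x + e"
        using Rats_dense_in_real[of "a x" "a x + e"] e by auto
      have low: "\<forall>\<^sub>F j in sequentially. a x - e < Q j"
      proof (cases "q1 \<le> 0")
        case True
        have "0 \<le> Q j" for j unfolding Q_def by simp
        then show ?thesis using True q1 by (intro always_eventually) (smt (verit))
      next
        case False
        define l where "l = c * (q1 - (a x - e)) / 2"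
        have l: "l > 0" using c q1 by (simp add: l_def)
        have xNF: "x \<notin> NF q1" using xN q1(1) unfolding N_def by blast
        obtain \<delta> where \<delta>: "\<delta> > 0" "\<forall>r. 0 < r \<longrightarrow> r < \<delta> \<longrightarrow> measure M (ball x r \<inter> {y. a y \<le> q1}) \<le> l * measure M (ball x r)"
          using NF(2)[OF q1(3) xNF l] by blast
        have "\<forall>\<^sub>F j in sequentially. \<rho> j < \<delta>" using order_tendstoD(2)[OF \<rho> \<delta>(1)] .
        with ev show ?thesis
        proof eventually_elim
          case (elim j)
          then have gj: "A j \<in> sets borel" "A j \<subseteq> ball x (\<rho> j)" "0 < \<rho> j"
            "c * measure M (ball x (\<rho> j)) \<le> measure M (A j)" unfolding good_seq_def by auto
          have "q1 - l / c \<le> Q j" unfolding Q_def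
            using gj c pos[OF gj(3)] False q1 a_bnd[of x] l \<delta>(2) elim(2)
            by (intro lower_step[of _ x "\<rho> j"]) auto
          moreover have "2 * (l / c) = q1 - (a x - e)" using c by (simp add: l_def)
          ultimately show ?case using q1 by linarith
        qed
      qed
      have upp: "\<forall>\<^sub>F j in sequentially. Q j < a x + e"
      proof -
        define l where "l = c * (a x + e - q2) / 2"
        have l: "l > 0" using c q2 by (simp add: l_def)
        have xNG: "x \<notin> NG q2" using xN q2(1) unfolding N_def by blast
        obtain \<delta> where \<delta>: "\<delta> > 0" "\<forall>r. 0 < r \<longrightarrow> r < \<delta> \<longrightarrow> measure M (ball x r \<inter> {y. q2 \<le> a y}) \<le> l * measure M (ball x r)"
          using NG(2)[OF q2(2) xNG l] by blast
        have "\<forall>\<^sub>F j in sequentially. \<rho> j < \<delta>" using order_tendstoD(2)[OF \<rho> \<delta>(1)] .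
        with ev show ?thesis
        proof eventually_elim
          case (elim j)
          then have gj: "A j \<in> sets borel" "A j \<subseteq> ball x (\<rho> j)" "0 < \<rho> j"
            "c * measure M (ball x (\<rho> j)) \<le> measure M (A j)" unfolding good_seq_def by auto
          have "Q j \<le> q2 + l / c" unfolding Q_def
            using gj c pos[OF gj(3)] q2 a_bnd[of x] l \<delta>(2) elim(2)
            by (intro upper_step[of _ x "\<rho> j"]) auto
          moreover have "2 * (l / c) = a x + e - q2" using c by (simp add: l_def)
          ultimately show ?case using q2 by linarith
        qed
      qed
      from low upp show "\<forall>\<^sub>F j in sequentially. dist (measure P (A j) / measure M (A j)) (a x) < e"
        by eventually_elim (auto simp: Q_def dist_real_def abs_less_iff)
    qed
  qed
  show ?thesis using Nnull main by blast
qed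

end

definition addm :: "'a measure \<Rightarrow> 'a measure \<Rightarrow> 'a measure" where
  "addm M N = measure_of (space M) (sets M) (\<lambda>A. emeasure M A + emeasure N A)"

lemma sets_addm[simp]: "sets (addm M N) = sets M"
  unfolding addm_def by (rule sets.sets_measure_of_eq)

lemma space_addm[simp]: "space (addm M N) = space M"
  unfolding addm_def by (rule sets.space_measure_of_eq)

lemma emeasure_addm:
  assumes N: "sets N = sets M" and A: "A \<in> sets M"
  shows "emeasure (addm M N) A = emeasure M A + emeasure N A"
  unfolding addm_def
proof (rule emeasure_measure_of_sigma[OF _ _ _ A])
  show "sigma_algebra (space M) (sets M)" by (rule sets.sigma_algebra_axioms)
  show "positive (sets M) (\<lambda>A. emeasure M A + emeasure N A)"
    by (simp add: positive_def)
  show "countably_additive (sets M) (\<lambda>A. emeasure M A + emeasure N A)"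
    unfolding countably_additive_def
  proof (intro allI impI)
    fix F :: "nat \<Rightarrow> _" assume F: "range F \<subseteq> sets M" "disjoint_family F" "\<Union> (range F) \<in> sets M"
    have "(\<Sum>i. emeasure M (F i) + emeasure N (F i)) = (\<Sum>i. emeasure M (F i)) + (\<Sum>i. emeasure N (F i))"
      by (rule suminf_add[symmetric]) auto
    also have "\<dots> = emeasure M (\<Union>(range F)) + emeasure N (\<Union>(range F))"
      using F N by (simp add: suminf_emeasure)
    finally show "(\<Sum>i. emeasure M (F i) + emeasure N (F i)) = emeasure M (\<Union>(range F)) + emeasure N (\<Union>(range F))" .
  qed
qed

definition locm :: "real measure \<Rightarrow> real set \<Rightarrow> real measure" where
  "locm G K = density (distr G borel (\<lambda>x. x)) (indicator K)"

lemma sets_locm[simp]: "sets (locm G K) = sets borel"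
  by (simp add: locm_def)

lemma id_meas_on:
  assumes "sets G = sets (borel_on I)"
  shows "(\<lambda>x. x) \<in> measurable G borel"
proof -
  have "(\<lambda>x. x) \<in> measurable (borel_on I) (borel :: real measure)"
    by (intro measurable_restrict_space1 measurable_ident_sets) simp
  then show ?thesis by (simp add: measurable_cong_sets[OF assms refl])
qed

lemma space_on:
  assumes "sets G = sets (borel_on I)"
  shows "space G = I"
  using sets_eq_imp_space_eq[OF assms] by (simp add: space_restrict_space)

lemma emeasure_locm:
  assumes G: "sets G = sets (borel_on I)" and K: "K \<in> sets borel" "K \<subseteq> I" and S: "S \<in> sets borel"
  shows "emeasure (locm G K) S = emeasure G (K \<inter> S)"
proof -
  have Kd: "K \<in> sets (distr G borel (\<lambda>x. x))" using K(1) by simp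
  have Sd: "S \<in> sets (distr G borel (\<lambda>x. x))" using S by simp
  have KS: "K \<inter> S \<in> sets borel" using K(1) S by (rule sets.Int)
  have "emeasure (locm G K) S = emeasure (distr G borel (\<lambda>x. x)) (K \<inter> S)"
    unfolding locm_def by (rule emeasure_restricted[OF Kd Sd])
  also have "\<dots> = emeasure G ((\<lambda>x. x) -` (K \<inter> S) \<inter> space G)"
    by (rule emeasure_distr[OF id_meas_on[OF G] KS])
  also have "(\<lambda>x. x) -` (K \<inter> S) \<inter> space G = K \<inter> S" using space_on[OF G] K(2) by auto
  finally show ?thesis .
qed

lemma nn_integral_locm:
  assumes G: "sets G = sets (borel_on I)" and K: "K \<in> sets borel"
    and h: "h \<in> borel_measurable borel"
  shows "(\<integral>\<^sup>+y. h y \<partial>locm G K) = (\<integral>\<^sup>+y. indicator K y * h y \<partial>G)"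
proof -
  have iK: "indicator K \<in> borel_measurable (distr G borel (\<lambda>x. x))"
    using K by (simp add: measurable_cong_sets[OF sets_distr refl] borel_measurable_indicator)
  have hd: "h \<in> borel_measurable (distr G borel (\<lambda>x. x))"
    using h by (simp add: measurable_cong_sets[OF sets_distr refl])
  have ih: "(\<lambda>y. indicator K y * h y) \<in> borel_measurable (distr G borel (\<lambda>x. x))"
    using iK hd by (rule borel_measurable_times_ennreal)
  have "(\<integral>\<^sup>+y. h y \<partial>locm G K) = (\<integral>\<^sup>+y. indicator K y * h y \<partial>distr G borel (\<lambda>x. x))"
    unfolding locm_def by (rule nn_integral_density[OF iK hd])
  also have "\<dots> = (\<integral>\<^sup>+y. indicator K y * h y \<partial>G)"
    by (rule nn_integral_distr[OF id_meas_on[OF G] ih])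
  finally show ?thesis .
qed

lemma ratio_lim:
  fixes t :: "nat \<Rightarrow> real"
  assumes t: "t \<longlonglongrightarrow> t0" and ev: "\<forall>\<^sub>F j in sequentially. 0 \<le> t j \<and> t j \<le> 1"
    and t0: "0 \<le> t0" "t0 \<le> 1"
  shows "(\<lambda>j. ennreal (t j) / ennreal (1 - t j)) \<longlonglongrightarrow> ennreal t0 / ennreal (1 - t0)"
proof (cases "t0 < 1")
  case True
  have ev1: "\<forall>\<^sub>F j in sequentially. t j < 1" using order_tendstoD(2)[OF t True] .
  have "(\<lambda>j. ennreal (t j / (1 - t j))) \<longlonglongrightarrow> ennreal (t0 / (1 - t0))"
    using True by (intro tendsto_ennrealI tendsto_divide tendsto_diff tendsto_const t) auto
  moreover have "\<forall>\<^sub>F j in sequentially. ennreal (t j / (1 - t j)) = ennreal (t j) / ennreal (1 - t j)"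
    using ev ev1 by eventually_elim (simp add: divide_ennreal)
  moreover have "ennreal (t0 / (1 - t0)) = ennreal t0 / ennreal (1 - t0)"
    using True t0 by (simp add: divide_ennreal)
  ultimately show ?thesis using Lim_transform_eventually by metis
next
  case False
  then have t01: "t0 = 1" using t0 by simp
  have "(\<lambda>j. ennreal (t j) / ennreal (1 - t j)) \<longlonglongrightarrow> top"
  proof (rule order_tendstoI)
    fix y :: ennreal assume ytop: "y < top"
    then obtain yr where yr: "y = ennreal yr" "0 \<le> yr" by (cases y rule: ennreal_cases) auto
    have "yr / (1 + yr) < 1" using yr by simp
    then have evt: "\<forall>\<^sub>F j in sequentially. yr / (1 + yr) < t j" using order_tendstoD(1)[OF t] t01 by simp
    from evt ev show "\<forall>\<^sub>F j in sequentially. y < ennreal (t j) / ennreal (1 - t j)"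
    proof eventually_elim
      case (elim j)
      have tj: "yr < t j * (1 + yr)" using elim(1) yr by (simp add: divide_less_eq)
      have tpos: "t j > 0"
      proof (rule ccontr)
        assume "\<not> t j > 0"
        then have "t j * (1 + yr) \<le> 0" using yr by (intro mult_nonpos_nonneg) auto
        then show False using tj yr by linarith
      qed
      show ?case
      proof (cases "t j = 1")
        case True
        then show ?thesis using ytop by simp
      next
        case False
        then have p: "1 - t j > 0" using elim(2) by simp
        have "yr < t j / (1 - t j)" using tj p by (simp add: less_divide_eq algebra_simps)
        then show ?thesis using yr p tpos by (simp add: divide_ennreal ennreal_less_iff)
      qed
    qed
  qed simp
  moreover have "ennreal t0 / ennreal (1 - t0) = top" using t01 by simp
  ultimately show ?thesis by simp
qed

definition Kset :: "real set \<Rightarrow> nat \<Rightarrow> real set" where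
  "Kset I n = {x. ball x (1 / real (Suc n)) \<subseteq> I} \<inter> cball 0 (real (Suc n))"

definition Lset :: "real set \<Rightarrow> nat \<Rightarrow> real set" where
  "Lset I n = {x. ball x (2 / real (Suc n)) \<subseteq> I} \<inter> cball 0 (real n)"

lemma ball_sub':
  fixes x y :: real
  assumes "dist x y + s \<le> r"
  shows "ball y s \<subseteq> ball x r"
proof
  fix z assume "z \<in> ball y s"
  then have "dist y z < s" by simp
  moreover have "dist x z \<le> dist x y + dist y z" by (rule dist_triangle)
  ultimately show "z \<in> ball x r" using assms by simp
qed

lemma closed_ballsub: "closed {x::real. ball x r \<subseteq> I}"
  unfolding closed_def open_contains_ball
proof (intro ballI)
  fix x assume "x \<in> - {x::real. ball x r \<subseteq> I}"
  then have "\<not> ball x r \<subseteq> I" by simp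
  then obtain y where y: "y \<in> ball x r" "y \<notin> I" by blast
  define e where "e = r - dist x y"
  have e: "e > 0" using y by (simp add: e_def)
  have "ball x e \<subseteq> - {x. ball x r \<subseteq> I}"
  proof
    fix z assume z: "z \<in> ball x e"
    have "dist z y \<le> dist z x + dist x y" by (rule dist_triangle)
    then have "dist z y < r" using z by (simp add: e_def dist_commute)
    then show "z \<in> - {x. ball x r \<subseteq> I}" using y(2) by auto
  qed
  then show "\<exists>e>0. ball x e \<subseteq> - {x. ball x r \<subseteq> I}" using e by blast
qed

lemma compact_Kset: "compact (Kset I n)"
  unfolding Kset_def by (intro closed_Int_compact closed_ballsub compact_cball)

lemma Kset_borel: "Kset I n \<in> sets borel"
  using compact_Kset by (rule borel_compact)

lemma Kset_sub: "Kset I n \<subseteq> I"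
proof
  fix x assume "x \<in> Kset I n"
  then have "ball x (1 / real (Suc n)) \<subseteq> I" by (simp add: Kset_def)
  moreover have "x \<in> ball x (1 / real (Suc n))" by simp
  ultimately show "x \<in> I" by blast
qed

lemma Lset_ball:
  assumes x: "x \<in> Lset I n" and \<rho>: "\<rho> \<le> 1 / real (Suc n)"
  shows "ball x \<rho> \<subseteq> Kset I n"
proof
  fix y assume y: "y \<in> ball x \<rho>"
  have "dist x y + 1 / real (Suc n) \<le> 2 / real (Suc n)" using y \<rho> by simp
  then have "ball y (1 / real (Suc n)) \<subseteq> ball x (2 / real (Suc n))" by (rule ball_sub')
  also have "\<dots> \<subseteq> I" using x by (simp add: Lset_def)
  finally have 1: "ball y (1 / real (Suc n)) \<subseteq> I" .
  have "dist 0 y \<le> dist 0 x + dist x y" by (rule dist_triangle)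
  moreover have "dist 0 x \<le> real n" using x by (simp add: Lset_def)
  moreover have h1: "1 / real (Suc n) \<le> 1" by simp
  have "dist x y < \<rho>" using y by simp
  then have "dist x y < 1" using \<rho> h1 by linarith
  ultimately have "dist 0 y \<le> real (Suc n)" by simp
  with 1 show "y \<in> Kset I n" by (simp add: Kset_def)
qed

lemma Lset_Kset: "x \<in> Lset I n \<Longrightarrow> x \<in> Kset I n"
  using Lset_ball[of x I n "1 / real (Suc n)"] by auto

lemma Lset_cover:
  assumes I: "open I" and x: "x \<in> I"
  shows "\<exists>n. x \<in> Lset I n"
proof -
  obtain e where e: "e > 0" "ball x e \<subseteq> I" using I x open_contains_ball by blast
  obtain n1 :: nat where n1: "2 / e < real n1" using reals_Archimedean2 by blast
  obtain n2 :: nat where n2: "dist 0 x < real n2" using reals_Archimedean2 by blast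
  define n where "n = max n1 n2"
  have "real n1 \<le> real (Suc n)" by (simp add: n_def)
  then have "2 / e < real (Suc n)" using n1 by linarith
  then have "2 < real (Suc n) * e" using e(1) by (simp only: pos_divide_less_eq)
  then have "2 / real (Suc n) < e" by (simp only: pos_divide_less_eq of_nat_0_less_iff zero_less_Suc mult.commute)
  then have "dist x x + 2 / real (Suc n) \<le> e" by simp
  then have "ball x (2 / real (Suc n)) \<subseteq> ball x e" by (rule ball_sub')
  then have "ball x (2 / real (Suc n)) \<subseteq> I" using e(2) by (rule subset_trans)
  moreover have "dist 0 x \<le> real n" using n2 by (simp add: n_def)
  ultimately show ?thesis by (intro exI[of _ n]) (simp add: Lset_def)
qed

lemma Kset_union:
  assumes "open I" shows "(\<Union>n. Kset I n) = I"
proof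
  show "(\<Union>n. Kset I n) \<subseteq> I" using Kset_sub by (simp add: UN_least)
  show "I \<subseteq> (\<Union>n. Kset I n)"
  proof
    fix x assume "x \<in> I"
    then obtain n where "x \<in> Lset I n" using Lset_cover[OF assms] by blast
    then have "x \<in> Kset I n" by (rule Lset_Kset)
    then show "x \<in> (\<Union>n. Kset I n)" by blast
  qed
qed

lemma Kset_sets_on: "I \<in> sets borel \<Longrightarrow> Kset I n \<in> sets (borel_on I)"
  by (subst sets_restrict_space_iff) (auto simp: Kset_sub Kset_borel)

lemma lf_Kfin:
  assumes "locally_finite_on I G"
  shows "emeasure G (Kset I n) \<noteq> \<infinity>"
  using assms compact_Kset[of I n] Kset_sub[of I n] unfolding locally_finite_on_def by auto

lemma lf_sigma_finite:
  assumes I: "open I" and G: "sets G = sets (borel_on I)" and fin: "\<And>n. emeasure G (Kset I n) \<noteq> \<infinity>"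
  shows "sigma_finite_measure G"
  unfolding sigma_finite_measure_def
proof (intro exI[of _ "range (Kset I)"] conjI)
  show "countable (range (Kset I))" by simp
  have "Kset I n \<in> sets G" for n using Kset_sets_on[of I n] I G by (simp add: borel_open)
  then show "range (Kset I) \<subseteq> sets G" by blast
  show "\<Union> (range (Kset I)) = space G" using Kset_union[OF I] space_on[OF G] by simp
  show "\<forall>a\<in>range (Kset I). emeasure G a \<noteq> \<infinity>" using fin by blast
qed

lemma div_cancel_enn:
  fixes u v s :: ennreal
  assumes uv: "u + v = s" and s0: "s \<noteq> 0" and st: "s \<noteq> top"
  shows "(u / s) / (v / s) = u / v"
proof -
  have "u \<noteq> top" "v \<noteq> top" using uv st by auto
  then obtain ur vr where u: "u = ennreal ur" "ur \<ge> 0" and v: "v = ennreal vr" "vr \<ge> 0"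
    by (metis ennreal_cases)
  define sr where "sr = ur + vr"
  have s: "s = ennreal sr" using uv u v by (simp add: sr_def ennreal_plus)
  have sr: "sr > 0" using s s0 sr_def u(2) v(2) by (metis ennreal_0 less_eq_real_def add_nonneg_nonneg)
  have us: "u / s = ennreal (ur / sr)" using u s sr by (simp add: divide_ennreal)
  have vs: "v / s = ennreal (vr / sr)" using v s sr by (simp add: divide_ennreal)
  show ?thesis
  proof (cases "vr = 0")
    case True
    have e: "ur / sr \<le> 0 \<longleftrightarrow> ur = 0" using sr u(2) by (auto simp: divide_le_0_iff)
    show ?thesis using True us vs u v sr e by (simp add: ennreal_eq_0_iff)
  next
    case False
    then have vr: "vr > 0" using v(2) by simp
    have "(u / s) / (v / s) = ennreal ((ur / sr) / (vr / sr))"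
      using us vs vr sr u(2) by (simp add: divide_ennreal)
    also have "(ur / sr) / (vr / sr) = ur / vr" using sr by simp
    also have "ennreal (ur / vr) = u / v" using u v vr by (simp add: divide_ennreal)
    finally show ?thesis .
  qed
qed

lemma mult_div_enn:
  fixes u s :: ennreal
  assumes st: "s \<noteq> top" and us: "u \<le> s"
  shows "s * (u / s) = u"
proof (cases "s = 0")
  case True
  then show ?thesis using us by simp
next
  case False
  obtain sr where s: "s = ennreal sr" "sr \<ge> 0" using st by (cases s rule: ennreal_cases) auto
  have "u \<noteq> top" using us st by (metis top.extremum_uniqueI)
  then obtain ur where u: "u = ennreal ur" "ur \<ge> 0" by (cases u rule: ennreal_cases) auto
  have sr: "sr > 0" using s False by (simp add: less_eq_real_def)
  have "s * (u / s) = ennreal sr * ennreal (ur / sr)" using s u sr by (simp add: divide_ennreal)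
  also have "\<dots> = ennreal (sr * (ur / sr))" using sr u by (intro ennreal_mult[symmetric]) auto
  also have "sr * (ur / sr) = ur" using sr by simp
  finally show ?thesis using u by simp
qed

lemma Dsym_of_Dbar:
  assumes I: "open I" "x \<in> I" and D: "Dbar \<mu> \<nu> I x z"
  shows "Dsym \<mu> \<nu> x z"
proof -
  obtain \<delta> where \<delta>: "\<delta> > 0" "ball x \<delta> \<subseteq> I" using I open_contains_ball by blast
  have Ib: "I \<in> sets borel" using I(1) by (rule borel_open)
  show ?thesis unfolding Dsym_def
  proof (rule tendsto_at_right_sequentially[OF \<delta>(1)])
    fix S :: "nat \<Rightarrow> real" assume S: "\<And>n. 0 < S n" "\<And>n. S n < \<delta>" "decseq S" "S \<longlonglongrightarrow> 0"
    define A where "A n = ball x (S n)" for n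
    have sub: "ball x (S n) \<subseteq> I" for n
    proof -
      have "dist x x + S n \<le> \<delta>" using S(2)[of n] by simp
      then have "ball x (S n) \<subseteq> ball x \<delta>" by (rule ball_sub')
      then show ?thesis using \<delta>(2) by (rule subset_trans)
    qed
    have Ain: "A n \<in> sets (borel_on I)" for n
      unfolding A_def using sub[of n] Ib by (subst sets_restrict_space_iff) auto
    have mm: "mm_converges G I A x" for G :: "real measure"
      unfolding mm_converges_def
    proof (rule conjI)
      show "\<forall>j. A j \<in> sets (borel_on I)" using Ain by blast
      have h1: "\<forall>j. 0 < S j \<and> A j \<subseteq> ball x (S j) \<and> ball x (S j) \<subseteq> I" using S(1) sub by (simp add: A_def)
      have h3: "\<exists>\<alpha>>0. \<alpha> \<le> 1 \<and> (\<forall>j. ennreal \<alpha> * emeasure G (ball x (S j)) \<le> emeasure G (A j))"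
        by (intro exI[of _ 1]) (simp add: A_def)
      show "\<exists>r. (\<forall>j. 0 < r j \<and> A j \<subseteq> ball x (r j) \<and> ball x (r j) \<subseteq> I) \<and> r \<longlonglongrightarrow> 0 \<and>
          (\<exists>\<alpha>>0. \<alpha> \<le> 1 \<and> (\<forall>j. ennreal \<alpha> * emeasure G (ball x (r j)) \<le> emeasure G (A j)))"
        by (intro exI[of _ S] conjI h1 S(4) h3)
    qed
    have "(\<lambda>j. emeasure \<mu> (A j) / emeasure \<nu> (A j)) \<longlonglongrightarrow> z"
      using D mm unfolding Dbar_def by blast
    then show "(\<lambda>n. emeasure \<mu> (ball x (S n)) / emeasure \<nu> (ball x (S n))) \<longlonglongrightarrow> z"
      by (simp add: A_def)
  qed
qed

lemma gen_part:
  fixes \<mu> \<nu> \<gamma> :: "real measure"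
  assumes sg: "sets \<gamma> = sets (borel_on I)" and sfg: "sigma_finite_measure \<gamma>"
    and sm: "sets \<mu> = sets (borel_on I)" and sn: "sets \<nu> = sets (borel_on I)"
    and sfm: "sigma_finite_measure \<mu>" and sfn: "sigma_finite_measure \<nu>"
    and em: "\<And>A. A \<in> sets \<gamma> \<Longrightarrow> emeasure \<gamma> A = emeasure \<mu> A + emeasure \<nu> A"
  shows "gen_RN_deriv I \<mu> \<nu> (\<lambda>x. RN_deriv \<gamma> \<mu> x / RN_deriv \<gamma> \<nu> x)"
proof -
  interpret G: sigma_finite_measure \<gamma> by (rule sfg)
  have nullg: "A \<in> null_sets \<mu> \<and> A \<in> null_sets \<nu>" if A: "A \<in> null_sets \<gamma>" for A
  proof -
    have As: "A \<in> sets \<gamma>" "emeasure \<gamma> A = 0" using A by auto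
    then have "emeasure \<mu> A + emeasure \<nu> A = 0" using em by simp
    then have "emeasure \<mu> A = 0" "emeasure \<nu> A = 0" by auto
    moreover have "A \<in> sets \<mu>" "A \<in> sets \<nu>" using As(1) sg sm sn by auto
    ultimately show ?thesis by auto
  qed
  define a0 where "a0 = RN_deriv \<gamma> \<mu>"
  define b0 where "b0 = RN_deriv \<gamma> \<nu>"
  have a0m: "a0 \<in> borel_measurable \<gamma>" unfolding a0_def by (rule borel_measurable_RN_deriv)
  have b0m: "b0 \<in> borel_measurable \<gamma>" unfolding b0_def by (rule borel_measurable_RN_deriv)
  have fm: "(\<lambda>x. a0 x / b0 x) \<in> borel_measurable (borel_on I)"
  proof -
    have "(\<lambda>x. a0 x / b0 x) \<in> borel_measurable \<gamma>" using a0m b0m by (rule borel_measurable_divide_ennreal)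
    then show ?thesis by (simp add: measurable_cong_sets[OF sg refl])
  qed
  show ?thesis unfolding gen_RN_deriv_def a0_def[symmetric] b0_def[symmetric]
  proof (intro conjI allI impI)
    show "(\<lambda>x. a0 x / b0 x) \<in> borel_measurable (borel_on I)" by (rule fm)
    fix \<gamma>' :: "real measure"
    assume H: "sigma_finite_measure \<gamma>' \<and> sets \<gamma>' = sets (borel_on I) \<and>
        absolutely_continuous \<gamma>' \<mu> \<and> absolutely_continuous \<gamma>' \<nu>"
    interpret G': sigma_finite_measure \<gamma>' using H by blast
    have sg': "sets \<gamma>' = sets (borel_on I)" using H by blast
    have acm: "absolutely_continuous \<gamma>' \<mu>" and acn: "absolutely_continuous \<gamma>' \<nu>" using H by auto
    have smg': "sets \<mu> = sets \<gamma>'" using sm sg' by simp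
    have sng': "sets \<nu> = sets \<gamma>'" using sn sg' by simp
    have sgg': "sets \<gamma> = sets \<gamma>'" using sg sg' by simp
    have spg: "space \<gamma> = space \<gamma>'" by (rule sets_eq_imp_space_eq[OF sgg'])
    define u where "u = RN_deriv \<gamma>' \<mu>"
    define v where "v = RN_deriv \<gamma>' \<nu>"
    have um: "u \<in> borel_measurable \<gamma>'" unfolding u_def by (rule borel_measurable_RN_deriv)
    have vm: "v \<in> borel_measurable \<gamma>'" unfolding v_def by (rule borel_measurable_RN_deriv)
    have umg: "u \<in> borel_measurable \<gamma>" using um by (simp add: measurable_cong_sets[OF sgg' refl])
    have vmg: "v \<in> borel_measurable \<gamma>" using vm by (simp add: measurable_cong_sets[OF sgg' refl])
    have uvm: "(\<lambda>x. u x + v x) \<in> borel_measurable \<gamma>'" using um vm by (rule borel_measurable_add)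
    have du: "density \<gamma>' u = \<mu>" unfolding u_def by (rule G'.density_RN_deriv[OF acm smg'])
    have dv: "density \<gamma>' v = \<nu>" unfolding v_def by (rule G'.density_RN_deriv[OF acn sng'])
    have uf: "AE x in \<gamma>'. u x \<noteq> \<infinity>" unfolding u_def by (rule G'.RN_deriv_finite[OF sfm acm smg'])
    have vf: "AE x in \<gamma>'. v x \<noteq> \<infinity>" unfolding v_def by (rule G'.RN_deriv_finite[OF sfn acn sng'])
    have dg: "density \<gamma>' (\<lambda>x. u x + v x) = \<gamma>"
    proof (rule measure_eqI)
      show "sets (density \<gamma>' (\<lambda>x. u x + v x)) = sets \<gamma>" using sgg' by simp
      fix A assume "A \<in> sets (density \<gamma>' (\<lambda>x. u x + v x))"
      then have A: "A \<in> sets \<gamma>'" by simp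
      have "emeasure (density \<gamma>' (\<lambda>x. u x + v x)) A = (\<integral>\<^sup>+x. (u x + v x) * indicator A x \<partial>\<gamma>')"
        by (rule emeasure_density[OF uvm A])
      also have "\<dots> = (\<integral>\<^sup>+x. u x * indicator A x + v x * indicator A x \<partial>\<gamma>')"
        by (simp add: distrib_right)
      also have "\<dots> = (\<integral>\<^sup>+x. u x * indicator A x \<partial>\<gamma>') + (\<integral>\<^sup>+x. v x * indicator A x \<partial>\<gamma>')"
        using um vm A by (intro nn_integral_add) simp_all
      also have "\<dots> = emeasure (density \<gamma>' u) A + emeasure (density \<gamma>' v) A"
        by (simp add: emeasure_density[OF um A] emeasure_density[OF vm A])
      also have "\<dots> = emeasure \<gamma> A" using du dv em[of A] A sgg' by simp
      finally show "emeasure (density \<gamma>' (\<lambda>x. u x + v x)) A = emeasure \<gamma> A" .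
    qed
    have null': "N \<in> null_sets \<gamma>" if N: "N \<in> null_sets \<gamma>'" for N
    proof -
      have Ns: "N \<in> sets \<gamma>'" using N by auto
      have "emeasure \<gamma> N = (\<integral>\<^sup>+x. (u x + v x) * indicator N x \<partial>\<gamma>')"
        using emeasure_density[OF uvm Ns] dg by simp
      also have "\<dots> = 0" using N by (rule nn_integral_null_set)
      finally show ?thesis using Ns sgg' by auto
    qed
    have AEtr: "AE x in \<gamma>. P x" if "AE x in \<gamma>'. P x" for P
    proof -
      from that obtain N where N: "{x \<in> space \<gamma>'. \<not> P x} \<subseteq> N" "emeasure \<gamma>' N = 0" "N \<in> sets \<gamma>'"
        by (rule AE_E)
      have "N \<in> null_sets \<gamma>" using N(2,3) by (intro null') auto
      then show ?thesis using N(1) spg by (intro AE_I'[of N]) auto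
    qed
    have ufg: "AE x in \<gamma>. u x \<noteq> \<infinity>" by (rule AEtr[OF uf])
    have vfg: "AE x in \<gamma>. v x \<noteq> \<infinity>" by (rule AEtr[OF vf])
    have nz: "AE x in \<gamma>. u x + v x \<noteq> 0"
    proof -
      define Z where "Z = {x \<in> space \<gamma>'. u x + v x = 0}"
      have Zs: "Z \<in> sets \<gamma>'" unfolding Z_def using uvm by measurable
      have "emeasure \<gamma> Z = (\<integral>\<^sup>+x. (u x + v x) * indicator Z x \<partial>\<gamma>')"
        using emeasure_density[OF uvm Zs] dg by simp
      also have "\<dots> = (\<integral>\<^sup>+x. 0 \<partial>\<gamma>')"
        by (intro nn_integral_cong) (simp add: Z_def indicator_def)
      finally have "Z \<in> null_sets \<gamma>" using Zs sgg' by auto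
      then show ?thesis using spg by (intro AE_I'[of Z]) (auto simp: Z_def)
    qed
    have hu: "AE x in \<gamma>. u x / (u x + v x) = a0 x"
    proof -
      have hm: "(\<lambda>x. u x / (u x + v x)) \<in> borel_measurable \<gamma>'"
        using um uvm by (rule borel_measurable_divide_ennreal)
      have "density \<gamma> (\<lambda>x. u x / (u x + v x)) = density (density \<gamma>' (\<lambda>x. u x + v x)) (\<lambda>x. u x / (u x + v x))"
        by (simp add: dg)
      also have "\<dots> = density \<gamma>' (\<lambda>x. (u x + v x) * (u x / (u x + v x)))"
        by (rule density_density_eq[OF uvm hm])
      also have "\<dots> = density \<gamma>' u"
      proof (rule density_cong)
        show "(\<lambda>x. (u x + v x) * (u x / (u x + v x))) \<in> borel_measurable \<gamma>'"
          using uvm hm by (rule borel_measurable_times_ennreal)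
        show "u \<in> borel_measurable \<gamma>'" by (rule um)
        show "AE x in \<gamma>'. (u x + v x) * (u x / (u x + v x)) = u x"
          using uf vf by eventually_elim (intro mult_div_enn, auto)
      qed
      also have "\<dots> = \<mu>" by (rule du)
      finally have "density \<gamma> (\<lambda>x. u x / (u x + v x)) = \<mu>" .
      moreover have "(\<lambda>x. u x / (u x + v x)) \<in> borel_measurable \<gamma>"
        using hm by (simp add: measurable_cong_sets[OF sgg' refl])
      ultimately show ?thesis unfolding a0_def by (intro G.RN_deriv_unique)
    qed
    have hv: "AE x in \<gamma>. v x / (u x + v x) = b0 x"
    proof -
      have hm: "(\<lambda>x. v x / (u x + v x)) \<in> borel_measurable \<gamma>'"
        using vm uvm by (rule borel_measurable_divide_ennreal)
      have "density \<gamma> (\<lambda>x. v x / (u x + v x)) = density (density \<gamma>' (\<lambda>x. u x + v x)) (\<lambda>x. v x / (u x + v x))"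
        by (simp add: dg)
      also have "\<dots> = density \<gamma>' (\<lambda>x. (u x + v x) * (v x / (u x + v x)))"
        by (rule density_density_eq[OF uvm hm])
      also have "\<dots> = density \<gamma>' v"
      proof (rule density_cong)
        show "(\<lambda>x. (u x + v x) * (v x / (u x + v x))) \<in> borel_measurable \<gamma>'"
          using uvm hm by (rule borel_measurable_times_ennreal)
        show "v \<in> borel_measurable \<gamma>'" by (rule vm)
        show "AE x in \<gamma>'. (u x + v x) * (v x / (u x + v x)) = v x"
          using uf vf by eventually_elim (intro mult_div_enn, auto)
      qed
      also have "\<dots> = \<nu>" by (rule dv)
      finally have "density \<gamma> (\<lambda>x. v x / (u x + v x)) = \<nu>" .
      moreover have "(\<lambda>x. v x / (u x + v x)) \<in> borel_measurable \<gamma>"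
        using hm by (simp add: measurable_cong_sets[OF sgg' refl])
      ultimately show ?thesis unfolding b0_def by (intro G.RN_deriv_unique)
    qed
    have "AE x in \<gamma>. a0 x / b0 x = u x / v x"
      using hu hv nz ufg vfg
    proof eventually_elim
      case (elim x)
      have "a0 x / b0 x = (u x / (u x + v x)) / (v x / (u x + v x))" using elim(1,2) by simp
      also have "\<dots> = u x / v x" using elim(3,4,5) by (intro div_cancel_enn) auto
      finally show ?case .
    qed
    then obtain N where N: "{x \<in> space \<gamma>. \<not> (a0 x / b0 x = u x / v x)} \<subseteq> N" "emeasure \<gamma> N = 0" "N \<in> sets \<gamma>"
      by (rule AE_E)
    have Nn: "N \<in> null_sets \<gamma>" using N(2,3) by auto
    have "\<forall>x\<in>I - N. a0 x / b0 x = u x / v x"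
      using N(1) space_on[OF sg] by blast
    then show "\<exists>N\<in>null_sets \<mu> \<inter> null_sets \<nu>. \<forall>x\<in>I - N. a0 x / b0 x = RN_deriv \<gamma>' \<mu> x / RN_deriv \<gamma>' \<nu> x"
      using nullg[OF Nn] unfolding u_def v_def by blast
  qed
qed

lemma enn_ratio_scale:
  fixes p q g :: real
  assumes g: "g > 0" and p: "p \<ge> 0" and q: "q \<ge> 0"
  shows "ennreal (p / g) / ennreal (q / g) = ennreal p / ennreal q"
proof (cases "q = 0")
  case True
  have e: "p / g \<le> 0 \<longleftrightarrow> p = 0" using g p by (auto simp: divide_le_0_iff)
  show ?thesis using True e p by (simp add: ennreal_eq_0_iff)
next
  case False
  then have q': "q > 0" using q by simp
  have "ennreal (p / g) / ennreal (q / g) = ennreal ((p / g) / (q / g))"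
    using g p q' by (intro divide_ennreal) auto
  also have "(p / g) / (q / g) = p / q" using g by simp
  also have "ennreal (p / q) = ennreal p / ennreal q" using p q' by (intro divide_ennreal[symmetric]) auto
  finally show ?thesis .
qed

lemma Dbar_at:
  fixes \<mu> \<nu> \<gamma> :: "real measure"
  assumes I: "open I" and sm: "sets \<mu> = sets (borel_on I)" and sn: "sets \<nu> = sets (borel_on I)"
    and sg: "sets \<gamma> = sets (borel_on I)"
    and em: "\<And>A. A \<in> sets \<gamma> \<Longrightarrow> emeasure \<gamma> A = emeasure \<mu> A + emeasure \<nu> A"
    and K: "K \<in> sets borel" "K \<subseteq> I" and Kfin: "emeasure \<gamma> K \<noteq> \<infinity>"
    and \<delta>: "\<delta> > 0" "\<And>\<rho>. 0 < \<rho> \<Longrightarrow> \<rho> \<le> \<delta> \<Longrightarrow> ball x \<rho> \<subseteq> K"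
    and pos: "\<And>r. r > 0 \<Longrightarrow> 0 < measure (locm \<gamma> K) (ball x r)"
    and lim: "\<And>A \<rho> c. 0 < c \<Longrightarrow> \<rho> \<longlonglongrightarrow> 0 \<Longrightarrow>
       (\<forall>\<^sub>F j in sequentially. A j \<in> sets borel \<and> A j \<subseteq> ball x (\<rho> j) \<and> 0 < \<rho> j \<and>
            c * measure (locm \<gamma> K) (ball x (\<rho> j)) \<le> measure (locm \<gamma> K) (A j)) \<Longrightarrow>
       ((\<lambda>j. measure (locm \<mu> K) (A j) / measure (locm \<gamma> K) (A j)) \<longlonglongrightarrow> t0)"
    and t0: "0 \<le> t0" "t0 \<le> 1"
  shows "Dbar \<mu> \<nu> I x (ennreal t0 / ennreal (1 - t0))"
  unfolding Dbar_def
proof (intro allI impI)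
  have Ib: "I \<in> sets borel" using I by (rule borel_open)
  have onI: "S \<in> sets (borel_on I)" if "S \<in> sets borel" "S \<subseteq> I" for S
    using that Ib by (subst sets_restrict_space_iff) auto
  have KI: "K \<in> sets \<gamma>" using onI[OF K] sg by simp
  have gfin: "emeasure \<gamma> S \<noteq> top" if "S \<in> sets \<gamma>" "S \<subseteq> K" for S
  proof -
    have "emeasure \<gamma> S \<le> emeasure \<gamma> K" using that KI by (intro emeasure_mono) auto
    then show ?thesis using Kfin by (metis infinity_ennreal_def top.extremum_uniqueI)
  qed
  have mfin: "emeasure \<mu> S \<noteq> top" "emeasure \<nu> S \<noteq> top" if "S \<in> sets \<gamma>" "S \<subseteq> K" for S
    using gfin[OF that] em[OF that(1)] by auto
  have hM: "measure (locm \<gamma> K) S = measure \<gamma> S" if "S \<in> sets borel" "S \<subseteq> K" for S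
  proof -
    have "emeasure (locm \<gamma> K) S = emeasure \<gamma> (K \<inter> S)" by (rule emeasure_locm[OF sg K that(1)])
    also have "K \<inter> S = S" using that(2) by blast
    finally show ?thesis by (simp add: measure_def)
  qed
  have hP: "measure (locm \<mu> K) S = measure \<mu> S" if "S \<in> sets borel" "S \<subseteq> K" for S
  proof -
    have "emeasure (locm \<mu> K) S = emeasure \<mu> (K \<inter> S)" by (rule emeasure_locm[OF sm K that(1)])
    also have "K \<inter> S = S" using that(2) by blast
    finally show ?thesis by (simp add: measure_def)
  qed
  fix A :: "nat \<Rightarrow> real set"
  assume mm: "mm_converges \<mu> I A x \<and> mm_converges \<nu> I A x"
  have Aon: "\<And>j. A j \<in> sets (borel_on I)" using mm unfolding mm_converges_def by blast
  have Ab: "A j \<in> sets borel" for j using Aon[of j] Ib by (subst (asm) sets_restrict_space_iff) auto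
  obtain r1 \<alpha>1 where r1: "\<forall>j. 0 < r1 j \<and> A j \<subseteq> ball x (r1 j) \<and> ball x (r1 j) \<subseteq> I" "r1 \<longlonglongrightarrow> 0"
    and a1: "0 < \<alpha>1" "\<alpha>1 \<le> 1" "\<forall>j. ennreal \<alpha>1 * emeasure \<mu> (ball x (r1 j)) \<le> emeasure \<mu> (A j)"
    using mm unfolding mm_converges_def by blast
  obtain r2 \<alpha>2 where r2: "\<forall>j. 0 < r2 j \<and> A j \<subseteq> ball x (r2 j) \<and> ball x (r2 j) \<subseteq> I" "r2 \<longlonglongrightarrow> 0"
    and a2: "0 < \<alpha>2" "\<alpha>2 \<le> 1" "\<forall>j. ennreal \<alpha>2 * emeasure \<nu> (ball x (r2 j)) \<le> emeasure \<nu> (A j)"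
    using mm unfolding mm_converges_def by blast
  define \<rho> where "\<rho> j = min (r1 j) (r2 j)" for j
  define c where "c = min \<alpha>1 \<alpha>2"
  have c: "c > 0" "c \<le> \<alpha>1" "c \<le> \<alpha>2" using a1 a2 by (auto simp: c_def)
  have \<rho>lim: "\<rho> \<longlonglongrightarrow> 0" unfolding \<rho>_def using tendsto_min[OF r1(2) r2(2)] by simp
  have ev\<delta>: "\<forall>\<^sub>F j in sequentially. \<rho> j < \<delta>" using order_tendstoD(2)[OF \<rho>lim \<delta>(1)] .
  have step: "A j \<in> sets borel \<and> A j \<subseteq> ball x (\<rho> j) \<and> 0 < \<rho> j \<and>
      c * measure \<gamma> (ball x (\<rho> j)) \<le> measure \<gamma> (A j) \<and> ball x (\<rho> j) \<subseteq> K"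
    if j: "\<rho> j < \<delta>" for j
  proof -
    have \<rho>pos: "0 < \<rho> j" using r1(1) r2(1) by (simp add: \<rho>_def)
    have BK: "ball x (\<rho> j) \<subseteq> K" using \<delta>(2)[OF \<rho>pos] j by simp
    have "A j \<subseteq> ball x (r1 j) \<inter> ball x (r2 j)" using r1(1) r2(1) by blast
    also have "ball x (r1 j) \<inter> ball x (r2 j) = ball x (\<rho> j)" by (auto simp: \<rho>_def)
    finally have AB: "A j \<subseteq> ball x (\<rho> j)" .
    have Bg: "ball x (\<rho> j) \<in> sets \<gamma>" using onI[of "ball x (\<rho> j)"] BK K(2) sg by auto
    have Ag: "A j \<in> sets \<gamma>" using Aon[of j] sg by simp
    have B1: "ball x (\<rho> j) \<subseteq> ball x (r1 j)" by (simp add: \<rho>_def subset_ball)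
    have B2: "ball x (\<rho> j) \<subseteq> ball x (r2 j)" by (simp add: \<rho>_def subset_ball)
    have B1s: "ball x (r1 j) \<in> sets \<mu>" using onI[of "ball x (r1 j)"] r1(1) sm by auto
    have B2s: "ball x (r2 j) \<in> sets \<nu>" using onI[of "ball x (r2 j)"] r2(1) sn by auto
    have "ennreal c * emeasure \<gamma> (ball x (\<rho> j)) = ennreal c * emeasure \<mu> (ball x (\<rho> j)) + ennreal c * emeasure \<nu> (ball x (\<rho> j))"
      using em[OF Bg] by (simp add: distrib_left)
    also have "\<dots> \<le> ennreal \<alpha>1 * emeasure \<mu> (ball x (r1 j)) + ennreal \<alpha>2 * emeasure \<nu> (ball x (r2 j))"
    proof (intro add_mono mult_mono)
      show "ennreal c \<le> ennreal \<alpha>1" "ennreal c \<le> ennreal \<alpha>2" using c by (auto intro: ennreal_leI)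
      show "emeasure \<mu> (ball x (\<rho> j)) \<le> emeasure \<mu> (ball x (r1 j))" using B1 B1s by (rule emeasure_mono)
      show "emeasure \<nu> (ball x (\<rho> j)) \<le> emeasure \<nu> (ball x (r2 j))" using B2 B2s by (rule emeasure_mono)
    qed auto
    also have "\<dots> \<le> emeasure \<mu> (A j) + emeasure \<nu> (A j)" using a1(3) a2(3) by (intro add_mono) auto
    also have "\<dots> = emeasure \<gamma> (A j)" using em[OF Ag] by simp
    finally have ineq: "ennreal c * emeasure \<gamma> (ball x (\<rho> j)) \<le> emeasure \<gamma> (A j)" .
    have "ennreal (c * measure \<gamma> (ball x (\<rho> j))) = ennreal c * emeasure \<gamma> (ball x (\<rho> j))"
      using c gfin[OF Bg BK] by (simp add: ennreal_mult emeasure_eq_ennreal_measure)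
    also note ineq
    also have "emeasure \<gamma> (A j) = ennreal (measure \<gamma> (A j))"
      using gfin[OF Ag] AB BK by (intro emeasure_eq_ennreal_measure) auto
    finally have "c * measure \<gamma> (ball x (\<rho> j)) \<le> measure \<gamma> (A j)"
      by (subst (asm) ennreal_le_iff) auto
    then show ?thesis using Ab[of j] AB \<rho>pos BK by blast
  qed
  have good: "\<forall>\<^sub>F j in sequentially. A j \<in> sets borel \<and> A j \<subseteq> ball x (\<rho> j) \<and> 0 < \<rho> j \<and>
            c * measure (locm \<gamma> K) (ball x (\<rho> j)) \<le> measure (locm \<gamma> K) (A j)"
    using ev\<delta>
  proof eventually_elim
    case (elim j)
    note s = step[OF elim]
    have "measure (locm \<gamma> K) (ball x (\<rho> j)) = measure \<gamma> (ball x (\<rho> j))" using s by (intro hM) auto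
    moreover have "measure (locm \<gamma> K) (A j) = measure \<gamma> (A j)" using s by (intro hM) auto
    ultimately show ?case using s by simp
  qed
  have L: "(\<lambda>j. measure (locm \<mu> K) (A j) / measure (locm \<gamma> K) (A j)) \<longlonglongrightarrow> t0"
    by (rule lim[OF c(1) \<rho>lim good])
  define t where "t j = measure \<mu> (A j) / measure \<gamma> (A j)" for j
  have evt: "\<forall>\<^sub>F j in sequentially. measure (locm \<mu> K) (A j) / measure (locm \<gamma> K) (A j) = t j \<and>
      0 \<le> t j \<and> t j \<le> 1 \<and> emeasure \<mu> (A j) / emeasure \<nu> (A j) = ennreal (t j) / ennreal (1 - t j)"
    using ev\<delta>
  proof eventually_elim
    case (elim j)
    note s = step[OF elim]
    have AK: "A j \<subseteq> K" using s by blast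
    have Ag: "A j \<in> sets \<gamma>" using Aon[of j] sg by simp
    have e1: "measure (locm \<gamma> K) (A j) = measure \<gamma> (A j)" using s by (intro hM) auto
    have e2: "measure (locm \<mu> K) (A j) = measure \<mu> (A j)" using s by (intro hP) auto
    have Bpos: "0 < measure \<gamma> (ball x (\<rho> j))"
      using pos[of "\<rho> j"] hM[of "ball x (\<rho> j)"] s by auto
    have gpos: "0 < measure \<gamma> (A j)" using s Bpos c(1) by (smt (verit) mult_pos_pos)
    define mA where "mA = measure \<mu> (A j)"
    define nA where "nA = measure \<nu> (A j)"
    have eA: "emeasure \<mu> (A j) = ennreal mA" unfolding mA_def using mfin(1)[OF Ag AK] by (rule emeasure_eq_ennreal_measure)
    have eN: "emeasure \<nu> (A j) = ennreal nA" unfolding nA_def using mfin(2)[OF Ag AK] by (rule emeasure_eq_ennreal_measure)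
    have mA0: "mA \<ge> 0" "nA \<ge> 0" by (simp_all add: mA_def nA_def)
    have ga0: "emeasure \<gamma> (A j) = ennreal (mA + nA)" using em[OF Ag] eA eN mA0 by (simp add: ennreal_plus)
    have "measure \<gamma> (A j) = enn2real (ennreal (mA + nA))" unfolding measure_def ga0 by (rule refl)
    also have "\<dots> = mA + nA" using mA0 by (intro enn2real_ennreal) simp
    finally have gA: "measure \<gamma> (A j) = mA + nA" .
    have tj: "t j = mA / (mA + nA)" by (simp add: t_def gA mA_def)
    have spos: "mA + nA > 0" using gpos gA by simp
    have t1: "1 - t j = nA / (mA + nA)" using spos by (simp add: tj field_simps)
    have "ennreal (t j) / ennreal (1 - t j) = ennreal mA / ennreal nA"
      unfolding t1 unfolding tj using spos mA0 by (rule enn_ratio_scale)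
    then have r: "emeasure \<mu> (A j) / emeasure \<nu> (A j) = ennreal (t j) / ennreal (1 - t j)"
      using eA eN by simp
    have "0 \<le> t j" using tj mA0 spos by simp
    moreover have "t j \<le> 1" using tj mA0 spos by simp
    ultimately show ?case using r e1 e2 by (simp add: t_def)
  qed
  have Lt: "t \<longlonglongrightarrow> t0"
    using Lim_transform_eventually[OF L] evt by (simp add: eventually_mono)
  have "(\<lambda>j. ennreal (t j) / ennreal (1 - t j)) \<longlonglongrightarrow> ennreal t0 / ennreal (1 - t0)"
    using Lt evt t0 by (intro ratio_lim) (auto elim: eventually_mono)
  moreover have "\<forall>\<^sub>F j in sequentially. ennreal (t j) / ennreal (1 - t j) = emeasure \<mu> (A j) / emeasure \<nu> (A j)"
    using evt by (rule eventually_mono) auto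
  ultimately show "(\<lambda>j. emeasure \<mu> (A j) / emeasure \<nu> (A j)) \<longlonglongrightarrow> ennreal t0 / ennreal (1 - t0)"
    by (rule Lim_transform_eventually)
qed

lemma enn_split:
  fixes a b :: ennreal
  assumes ab: "a + b = 1"
  shows "a = ennreal (min 1 (enn2real a)) \<and> b = ennreal (1 - min 1 (enn2real a))"
proof -
  have "a \<le> 1" using ab by (metis le_iff_add)
  then have "a \<noteq> top" by (metis ennreal_one_less_top leD)
  then obtain r where r: "a = ennreal r" "0 \<le> r" by (cases a rule: ennreal_cases) auto
  have r1: "r \<le> 1" using \<open>a \<le> 1\<close> r by simp
  have "b \<le> 1" using ab by (metis add.commute le_iff_add)
  then have "b \<noteq> top" by (metis ennreal_one_less_top leD)
  then obtain s where s: "b = ennreal s" "0 \<le> s" by (cases b rule: ennreal_cases) auto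
  have "ennreal (r + s) = ennreal 1" using ab r s by (simp add: ennreal_plus)
  then have rs: "r + s = 1" using r(2) s(2) by (subst (asm) ennreal_inj) auto
  have m: "min 1 (enn2real a) = r" using r r1 by simp
  show ?thesis using m r s rs by simp
qed

theorem theoremC7:
  fixes I :: "real set" and \<mu> \<nu> :: "real measure"
  assumes "open I" and "is_interval I"
    and "locally_finite_on I \<mu>" and "locally_finite_on I \<nu>"
  shows "\<exists>f N. gen_RN_deriv I \<mu> \<nu> f \<and> N \<in> null_sets \<mu> \<and> N \<in> null_sets \<nu> \<and>
           (\<forall>x \<in> I - N. Dbar \<mu> \<nu> I x (f x) \<and> Dsym \<mu> \<nu> x (f x))"
proof -
  have sm: "sets \<mu> = sets (borel_on I)" using assms(3) by (simp add: locally_finite_on_def)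
  have sn: "sets \<nu> = sets (borel_on I)" using assms(4) by (simp add: locally_finite_on_def)
  have Ib: "I \<in> sets borel" using assms(1) by (rule borel_open)
  have onI: "S \<in> sets (borel_on I)" if "S \<in> sets borel" "S \<subseteq> I" for S
    using that Ib by (subst sets_restrict_space_iff) auto
  define \<gamma> where "\<gamma> = addm \<mu> \<nu>"
  have sg: "sets \<gamma> = sets (borel_on I)" unfolding \<gamma>_def using sm by simp
  have em: "emeasure \<gamma> A = emeasure \<mu> A + emeasure \<nu> A" if "A \<in> sets \<gamma>" for A
  proof -
    have "A \<in> sets \<mu>" using that sg sm by simp
    moreover have "sets \<nu> = sets \<mu>" using sm sn by simp
    ultimately show ?thesis unfolding \<gamma>_def by (intro emeasure_addm)
  qed
  have Kg: "Kset I n \<in> sets \<gamma>" for n using Kset_sets_on[OF Ib] sg by simp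
  have Kfm: "emeasure \<mu> (Kset I n) \<noteq> \<infinity>" for n by (rule lf_Kfin[OF assms(3)])
  have Kfn: "emeasure \<nu> (Kset I n) \<noteq> \<infinity>" for n by (rule lf_Kfin[OF assms(4)])
  have Kfg: "emeasure \<gamma> (Kset I n) \<noteq> \<infinity>" for n using em[OF Kg] Kfm[of n] Kfn[of n] by simp
  have sfm: "sigma_finite_measure \<mu>" by (rule lf_sigma_finite[OF assms(1) sm Kfm])
  have sfn: "sigma_finite_measure \<nu>" by (rule lf_sigma_finite[OF assms(1) sn Kfn])
  have sfg: "sigma_finite_measure \<gamma>" by (rule lf_sigma_finite[OF assms(1) sg Kfg])
  have gen: "gen_RN_deriv I \<mu> \<nu> (\<lambda>x. RN_deriv \<gamma> \<mu> x / RN_deriv \<gamma> \<nu> x)"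
    by (rule gen_part[OF sg sfg sm sn sfm sfn em])
  interpret G: sigma_finite_measure \<gamma> by (rule sfg)
  have nullg: "A \<in> null_sets \<mu> \<and> A \<in> null_sets \<nu>" if A: "A \<in> null_sets \<gamma>" for A
  proof -
    have As: "A \<in> sets \<gamma>" "emeasure \<gamma> A = 0" using A by auto
    then have "emeasure \<mu> A + emeasure \<nu> A = 0" using em by simp
    then have "emeasure \<mu> A = 0" "emeasure \<nu> A = 0" by auto
    moreover have "A \<in> sets \<mu>" "A \<in> sets \<nu>" using As(1) sg sm sn by auto
    ultimately show ?thesis by auto
  qed
  have acm: "absolutely_continuous \<gamma> \<mu>" unfolding absolutely_continuous_def using nullg by blast
  have acn: "absolutely_continuous \<gamma> \<nu>" unfolding absolutely_continuous_def using nullg by blast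
  define a0 where "a0 = RN_deriv \<gamma> \<mu>"
  define b0 where "b0 = RN_deriv \<gamma> \<nu>"
  have a0m: "a0 \<in> borel_measurable \<gamma>" unfolding a0_def by (rule borel_measurable_RN_deriv)
  have b0m: "b0 \<in> borel_measurable \<gamma>" unfolding b0_def by (rule borel_measurable_RN_deriv)
  have da: "density \<gamma> a0 = \<mu>" unfolding a0_def using sm sg by (intro G.density_RN_deriv[OF acm]) simp
  have db: "density \<gamma> b0 = \<nu>" unfolding b0_def using sn sg by (intro G.density_RN_deriv[OF acn]) simp
  have ab1: "AE x in \<gamma>. a0 x + b0 x = 1"
  proof -
    have abm: "(\<lambda>x. a0 x + b0 x) \<in> borel_measurable \<gamma>" using a0m b0m by (rule borel_measurable_add)
    have "density \<gamma> (\<lambda>x. a0 x + b0 x) = density \<gamma> (\<lambda>_. 1)"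
    proof (rule measure_eqI)
      show "sets (density \<gamma> (\<lambda>x. a0 x + b0 x)) = sets (density \<gamma> (\<lambda>_. 1))" by simp
      fix A assume "A \<in> sets (density \<gamma> (\<lambda>x. a0 x + b0 x))"
      then have A: "A \<in> sets \<gamma>" by simp
      have "emeasure (density \<gamma> (\<lambda>x. a0 x + b0 x)) A = (\<integral>\<^sup>+x. (a0 x + b0 x) * indicator A x \<partial>\<gamma>)"
        by (rule emeasure_density[OF abm A])
      also have "\<dots> = (\<integral>\<^sup>+x. a0 x * indicator A x + b0 x * indicator A x \<partial>\<gamma>)"
        by (simp add: distrib_right)
      also have "\<dots> = (\<integral>\<^sup>+x. a0 x * indicator A x \<partial>\<gamma>) + (\<integral>\<^sup>+x. b0 x * indicator A x \<partial>\<gamma>)"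
        using a0m b0m A by (intro nn_integral_add) simp_all
      also have "\<dots> = emeasure (density \<gamma> a0) A + emeasure (density \<gamma> b0) A"
        by (simp add: emeasure_density[OF a0m A] emeasure_density[OF b0m A])
      also have "\<dots> = emeasure \<gamma> A" using da db em[OF A] by simp
      also have "\<dots> = emeasure (density \<gamma> (\<lambda>_. 1)) A" by (simp add: density_1)
      finally show "emeasure (density \<gamma> (\<lambda>x. a0 x + b0 x)) A = emeasure (density \<gamma> (\<lambda>_. 1)) A" .
    qed
    then show ?thesis using G.density_unique_iff[OF abm, of "\<lambda>_. 1"] by simp
  qed
  define a1 where "a1 x = (if x \<in> I then min 1 (enn2real (a0 x)) else 0)" for x
  have a1m: "a1 \<in> borel_measurable borel"
  proof -
    have "(\<lambda>x. min 1 (enn2real (a0 x))) \<in> borel_measurable \<gamma>" using a0m by measurable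
    then have "(\<lambda>x. min 1 (enn2real (a0 x))) \<in> borel_measurable (borel_on I)"
      by (simp add: measurable_cong_sets[OF sg refl])
    then have "(\<lambda>x. if x \<in> I then min 1 (enn2real (a0 x)) else 0) \<in> borel_measurable borel"
      using Ib by (subst (asm) measurable_restrict_space_iff) auto
    then show ?thesis unfolding a1_def[abs_def] .
  qed
  have a1b: "0 \<le> a1 y" "a1 y \<le> 1" for y by (auto simp: a1_def)
  have ae1: "AE x in \<gamma>. a0 x = ennreal (a1 x) \<and> b0 x = ennreal (1 - a1 x)"
    using ab1 AE_space
  proof eventually_elim
    case (elim x)
    have "x \<in> I" using elim(2) space_on[OF sg] by simp
    then show ?case using enn_split[OF elim(1)] by (simp add: a1_def)
  qed
  have int\<mu>: "emeasure \<mu> S = (\<integral>\<^sup>+y. ennreal (a1 y) * indicator S y \<partial>\<gamma>)" if S: "S \<in> sets \<gamma>" for S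
  proof -
    have "emeasure \<mu> S = emeasure (density \<gamma> a0) S" using da by simp
    also have "\<dots> = (\<integral>\<^sup>+y. a0 y * indicator S y \<partial>\<gamma>)" by (rule emeasure_density[OF a0m S])
    also have "\<dots> = (\<integral>\<^sup>+y. ennreal (a1 y) * indicator S y \<partial>\<gamma>)"
      using ae1 by (intro nn_integral_cong_AE) (auto elim: eventually_mono)
    finally show ?thesis .
  qed
  have lp: "lp_setup (locm \<gamma> (Kset I n)) (locm \<mu> (Kset I n)) a1" for n
  proof (rule lp_setup.intro)
    show "sets (locm \<gamma> (Kset I n)) = sets borel" by simp
    show "finite_measure (locm \<gamma> (Kset I n))"
    proof (rule finite_measureI)
      have "space (locm \<gamma> (Kset I n)) = UNIV" using sets_eq_imp_space_eq[OF sets_locm] by simp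
      moreover have "emeasure (locm \<gamma> (Kset I n)) UNIV = emeasure \<gamma> (Kset I n)"
        using emeasure_locm[OF sg Kset_borel Kset_sub, of UNIV] by simp
      ultimately show "emeasure (locm \<gamma> (Kset I n)) (space (locm \<gamma> (Kset I n))) \<noteq> \<infinity>" using Kfg[of n] by simp
    qed
    show "sets (locm \<mu> (Kset I n)) = sets borel" by simp
    show "a1 \<in> borel_measurable borel" by (rule a1m)
    show "\<And>y. 0 \<le> a1 y" "\<And>y. a1 y \<le> 1" by (rule a1b)+
    fix S :: "real set" assume S: "S \<in> sets borel"
    have KS: "Kset I n \<inter> S \<in> sets \<gamma>" using onI[of "Kset I n \<inter> S"] Kset_borel[of I n] S Kset_sub[of I n] sg by auto
    have hm: "(\<lambda>y. ennreal (a1 y) * indicator S y) \<in> borel_measurable borel" using a1m S by measurable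
    have "emeasure (locm \<mu> (Kset I n)) S = emeasure \<mu> (Kset I n \<inter> S)"
      by (rule emeasure_locm[OF sm Kset_borel Kset_sub S])
    also have "\<dots> = (\<integral>\<^sup>+y. ennreal (a1 y) * indicator (Kset I n \<inter> S) y \<partial>\<gamma>)" by (rule int\<mu>[OF KS])
    also have "\<dots> = (\<integral>\<^sup>+y. indicator (Kset I n) y * (ennreal (a1 y) * indicator S y) \<partial>\<gamma>)"
      by (intro nn_integral_cong) (simp add: indicator_inter_arith ac_simps)
    also have "\<dots> = (\<integral>\<^sup>+y. ennreal (a1 y) * indicator S y \<partial>locm \<gamma> (Kset I n))"
      by (rule nn_integral_locm[OF sg Kset_borel hm, symmetric])
    finally show "emeasure (locm \<mu> (Kset I n)) S = (\<integral>\<^sup>+y. ennreal (a1 y) * indicator S y \<partial>locm \<gamma> (Kset I n))" .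
  qed
  define Good where "Good n x \<longleftrightarrow> (\<forall>r>0. 0 < measure (locm \<gamma> (Kset I n)) (ball x r)) \<and>
      (\<forall>A \<rho> c. 0 < c \<longrightarrow> \<rho> \<longlonglongrightarrow> 0 \<longrightarrow>
         (\<forall>\<^sub>F j in sequentially. lp_setup.good_seq (locm \<gamma> (Kset I n)) x A \<rho> c j) \<longrightarrow>
        ((\<lambda>j. measure (locm \<mu> (Kset I n)) (A j) / measure (locm \<gamma> (Kset I n)) (A j)) \<longlonglongrightarrow> a1 x))" for n x
  have "\<exists>N\<in>null_sets (locm \<gamma> (Kset I n)). \<forall>x. x \<notin> N \<longrightarrow> Good n x" for n
    unfolding Good_def by (rule lp_setup.lebesgue_pt[OF lp])
  then have "\<forall>n. \<exists>N. N \<in> null_sets (locm \<gamma> (Kset I n)) \<and> (\<forall>x. x \<notin> N \<longrightarrow> Good n x)"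
    by blast
  from choice[OF this] obtain NN where NN0: "\<forall>n. NN n \<in> null_sets (locm \<gamma> (Kset I n)) \<and> (\<forall>x. x \<notin> NN n \<longrightarrow> Good n x)"
    by blast
  have NN: "\<And>n. NN n \<in> null_sets (locm \<gamma> (Kset I n))" "\<And>n x. x \<notin> NN n \<Longrightarrow> Good n x"
    using NN0 by blast+
  have NNg: "Kset I n \<inter> NN n \<in> null_sets \<gamma>" for n
  proof -
    have NNb: "NN n \<in> sets borel" using NN(1)[of n] by (auto simp: null_sets_def)
    have "Kset I n \<inter> NN n \<in> sets \<gamma>" using onI[of "Kset I n \<inter> NN n"] NNb Kset_borel[of I n] Kset_sub[of I n] sg by auto
    moreover have "emeasure \<gamma> (Kset I n \<inter> NN n) = emeasure (locm \<gamma> (Kset I n)) (NN n)"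
      using emeasure_locm[OF sg Kset_borel Kset_sub NNb] by simp
    moreover have "emeasure (locm \<gamma> (Kset I n)) (NN n) = 0" using NN(1)[of n] by auto
    ultimately show ?thesis by auto
  qed
  obtain Nae where Nae: "{x \<in> space \<gamma>. \<not> (a0 x = ennreal (a1 x) \<and> b0 x = ennreal (1 - a1 x))} \<subseteq> Nae"
      "emeasure \<gamma> Nae = 0" "Nae \<in> sets \<gamma>"
    using ae1 by (rule AE_E)
  define N where "N = Nae \<union> (\<Union>n. Kset I n \<inter> NN n)"
  have Ng: "N \<in> null_sets \<gamma>" unfolding N_def using Nae(2,3) NNg by (intro null_sets.Un null_sets_UN) auto
  have main: "Dbar \<mu> \<nu> I x (a0 x / b0 x)" if x: "x \<in> I - N" for x
  proof -
    have xI: "x \<in> I" using x by simp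
    have "x \<in> space \<gamma>" using xI space_on[OF sg] by simp
    then have ab: "a0 x = ennreal (a1 x)" "b0 x = ennreal (1 - a1 x)" using x Nae(1) unfolding N_def by blast+
    obtain n where xL: "x \<in> Lset I n" using Lset_cover[OF assms(1) xI] by blast
    have xK: "x \<in> Kset I n" using xL by (rule Lset_Kset)
    have xNN: "x \<notin> NN n" using x xK unfolding N_def by blast
    note P = NN(2)[OF xNN, unfolded Good_def]
    have "Dbar \<mu> \<nu> I x (ennreal (a1 x) / ennreal (1 - a1 x))"
    proof (rule Dbar_at[OF assms(1) sm sn sg em Kset_borel Kset_sub Kfg])
      show "0 < 1 / real (Suc n)" by simp
      show "ball x \<rho> \<subseteq> Kset I n" if "0 < \<rho>" "\<rho> \<le> 1 / real (Suc n)" for \<rho>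
        using Lset_ball[OF xL that(2)] .
      show "0 < measure (locm \<gamma> (Kset I n)) (ball x r)" if "r > 0" for r using P that by blast
      show "(\<lambda>j. measure (locm \<mu> (Kset I n)) (A j) / measure (locm \<gamma> (Kset I n)) (A j)) \<longlonglongrightarrow> a1 x"
        if "0 < c" "\<rho> \<longlonglongrightarrow> 0" "\<forall>\<^sub>F j in sequentially. A j \<in> sets borel \<and> A j \<subseteq> ball x (\<rho> j) \<and> 0 < \<rho> j \<and>
            c * measure (locm \<gamma> (Kset I n)) (ball x (\<rho> j)) \<le> measure (locm \<gamma> (Kset I n)) (A j)"
        for A \<rho> c
      proof -
        have "\<forall>\<^sub>F j in sequentially. lp_setup.good_seq (locm \<gamma> (Kset I n)) x A \<rho> c j"
          using that(3) by (simp add: lp_setup.good_seq_def[OF lp])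
        then show ?thesis using P that(1,2) by blast
      qed
      show "0 \<le> a1 x" "a1 x \<le> 1" by (rule a1b)+
    qed
    then show ?thesis using ab by simp
  qed
  show ?thesis
  proof (intro exI conjI)
    show "gen_RN_deriv I \<mu> \<nu> (\<lambda>x. a0 x / b0 x)" using gen unfolding a0_def b0_def .
    show "N \<in> null_sets \<mu>" "N \<in> null_sets \<nu>" using nullg[OF Ng] by auto
    show "\<forall>x\<in>I - N. Dbar \<mu> \<nu> I x (a0 x / b0 x) \<and> Dsym \<mu> \<nu> x (a0 x / b0 x)"
    proof
      fix x assume x: "x \<in> I - N"
      have D: "Dbar \<mu> \<nu> I x (a0 x / b0 x)" by (rule main[OF x])
      moreover have "Dsym \<mu> \<nu> x (a0 x / b0 x)" using x by (intro Dsym_of_Dbar[OF assms(1) _ D]) auto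
      ultimately show "Dbar \<mu> \<nu> I x (a0 x / b0 x) \<and> Dsym \<mu> \<nu> x (a0 x / b0 x)" ..
    qed
  qed
qed

end
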